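(* Let $\mathbf{X}$ be $\mathbb{R}P^n$ with $G_{\mathbf{X}} = \mathrm{PGL}(n+1,\mathbb{R})$ ($n\ge 2$), or $\mathrm{Ein}^{p,q}$ with $G_{\mathbf{X}}=\mathrm{PO}(p+1,q+1)$ ($\min(p,q)\ge 2$), and fix a Riemannian metric on $\mathbf{X}$. Let $(g_k)$ be a sequence in $G_{\mathbf{X}}$, $(T_k)$ a sequence of positive numbers with $T_k\to\infty$, and $x \in \mathbf{X}$ such that: (1) for every sequence $x_k\rightarrow x$, we have $g_k x_k \rightarrow x$; (2) for every non-zero $v \in T_{x}\mathbf{X}$, $\frac{1}{T_k} \log \|D_{x}g_k v\| \rightarrow -1$. Then, up to passing to a subsequence, there exists an open set $W_{\max} \ni x$ which is an affine chart domain (the complement of a projective hyperplane) if $\mathbf{X} = \mathbb{R}P^n$, or a Minkowski patch if $\mathbf{X} = \mathrm{Ein}^{p,q}$, such that for every compact subset $K \subset W_{\max}$, $g_kK \rightarrow \{x\}$ for the Hausdorff topology.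
   Context: $\mathrm{Ein}^{p,q}$ is the set of isotropic lines of $\mathbb{R}^{p+1,q+1}$ with the induced conformal structure; a Minkowski patch of $\mathrm{Ein}^{p,q}$ is $M_y=\{[w]:B(v,w)\neq0\}$ for an isotropic vector $v$, $y=[v]$, where $B$ is the bilinear form of signature $(p+1,q+1)$. *)

theory Defs
  imports "HOL-Analysis.Analysis"
begin

text \<open>Points of RP^(N-1) (and of Ein, a subset of it) are represented by non-zero
  vectors of real^'n, N = CARD('n); [u] = [c u] for c nonzero.  The fixed
  Riemannian metric is the round (Fubini-Study) metric, i.e. the one making the
  double cover S^(N-1) -> RP^(N-1) a local isometry.\<close>

text \<open>Riemannian distance of the round metric between the lines [u] and [v].\<close>
definition pangle :: "real^'n \<Rightarrow> real^'n \<Rightarrow> real" where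
  "pangle u v = arccos (\<bar>u \<bullet> v\<bar> / (norm u * norm v))"

text \<open>Action of a matrix on the unit sphere (lift of the projective action).\<close>
definition sph_act :: "real^'n^'n \<Rightarrow> real^'n \<Rightarrow> real^'n" where
  "sph_act A w = (1 / norm (A *v w)) *\<^sub>R (A *v w)"

text \<open>Norm of D_x g v for the round metric; x a unit representative, v in T_x.\<close>
definition dnorm :: "real^'n^'n \<Rightarrow> real^'n \<Rightarrow> real^'n \<Rightarrow> real" where
  "dnorm A x v = norm (frechet_derivative (sph_act A) (at x) v)"

definition RP_space :: "(real^'n) set" where
  "RP_space = {w. w \<noteq> 0}"

definition PGL_lifts :: "(real^'n^'n) set" where
  "PGL_lifts = {A. invertible A}"

text \<open>Tangent space at the point represented by the unit vector x.\<close>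
definition RP_tangent :: "real^'n \<Rightarrow> (real^'n) set" where
  "RP_tangent x = {v. v \<bullet> x = 0}"

definition affine_charts :: "(real^'n) set set" where
  "affine_charts = {{w. w \<noteq> 0 \<and> \<phi> \<bullet> w \<noteq> 0} | \<phi>. \<phi> \<noteq> 0}"

definition signform :: "('n \<Rightarrow> real) \<Rightarrow> real^'n \<Rightarrow> real^'n \<Rightarrow> real" where
  "signform s u v = (\<Sum>i\<in>UNIV. s i * (u $ i) * (v $ i))"

definition Ein_space :: "('n \<Rightarrow> real) \<Rightarrow> (real^'n) set" where
  "Ein_space s = {w. w \<noteq> 0 \<and> signform s w w = 0}"

definition O_lifts :: "('n \<Rightarrow> real) \<Rightarrow> (real^'n^'n) set" where
  "O_lifts s = {A. invertible A \<and>
     (\<forall>v w. signform s (A *v v) (A *v w) = signform s v w)}"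

definition Ein_tangent :: "('n \<Rightarrow> real) \<Rightarrow> real^'n \<Rightarrow> (real^'n) set" where
  "Ein_tangent s x = {v. v \<bullet> x = 0 \<and> signform s x v = 0}"

definition Minkowski_patches :: "('n \<Rightarrow> real) \<Rightarrow> (real^'n) set set" where
  "Minkowski_patches s =
     {{w \<in> Ein_space s. signform s v w \<noteq> 0} | v. v \<in> Ein_space s}"

end

theory Submission
  imports Defs
begin


definition aa :: "real^'n^'n \<Rightarrow> real^'n \<Rightarrow> real" where
  "aa A x = norm (A *v x)"
definition uu :: "real^'n^'n \<Rightarrow> real^'n \<Rightarrow> real^'n" where
  "uu A x = (1 / aa A x) *\<^sub>R (A *v x)"
definition cc :: "real^'n^'n \<Rightarrow> real^'n \<Rightarrow> real^'n" where
  "cc A x = (1 / aa A x) *\<^sub>R (transpose A *v uu A x)"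
definition RR :: "real^'n^'n \<Rightarrow> real^'n \<Rightarrow> real^'n \<Rightarrow> real^'n" where
  "RR A x w = (1 / aa A x) *\<^sub>R (A *v w) - (cc A x \<bullet> w) *\<^sub>R uu A x"

lemma aa_pos: "A *v x \<noteq> 0 \<Longrightarrow> aa A x > 0"
  by (simp add: aa_def)

lemma uu_norm: "A *v x \<noteq> 0 \<Longrightarrow> norm (uu A x) = 1"
  by (simp add: uu_def aa_def)

lemma cc_dot: "cc A x \<bullet> w = uu A x \<bullet> (A *v w) / aa A x"
proof -
  have "(transpose A *v uu A x) \<bullet> w = uu A x \<bullet> (A *v w)"
    by (metis dot_lmul_matrix transpose_transpose vector_transpose_matrix)
  then show ?thesis by (simp add: cc_def)
qed

lemma cc_x: "A *v x \<noteq> 0 \<Longrightarrow> cc A x \<bullet> x = 1"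
proof -
  assume nz: "A *v x \<noteq> 0"
  have "uu A x \<bullet> (A *v x) = aa A x * (uu A x \<bullet> uu A x)"
    using nz by (simp add: uu_def aa_def)
  also have "\<dots> = aa A x" using uu_norm[OF nz] by (simp add: inner_commute dot_square_norm)
  finally show ?thesis using aa_pos[OF nz] by (simp add: cc_dot)
qed

lemma decomp: "A *v x \<noteq> 0 \<Longrightarrow> A *v w = aa A x *\<^sub>R ((cc A x \<bullet> w) *\<^sub>R uu A x + RR A x w)"
  using aa_pos[of A x] by (simp add: RR_def)

lemma uu_RR: "A *v x \<noteq> 0 \<Longrightarrow> uu A x \<bullet> RR A x w = 0"
proof -
  assume nz: "A *v x \<noteq> 0"
  have "uu A x \<bullet> uu A x = 1" using uu_norm[OF nz] by (simp add: dot_square_norm)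
  then show ?thesis using aa_pos[OF nz]
    by (simp add: RR_def cc_dot inner_diff_right algebra_simps)
qed

lemma RR_x: "A *v x \<noteq> 0 \<Longrightarrow> RR A x x = 0"
  by (simp add: RR_def cc_x uu_def)

lemma RR_add: "RR A x (v + w) = RR A x v + RR A x w"
  unfolding RR_def by (simp add: matrix_vector_right_distrib inner_add_right scaleR_add_right scaleR_add_left)

lemma RR_scale: "RR A x (t *\<^sub>R w) = t *\<^sub>R RR A x w"
  unfolding RR_def by (simp add: matrix_vector_mult_scaleR scaleR_diff_right)

lemma RR_diff: "RR A x (v - w) = RR A x v - RR A x w"
  by (metis RR_add diff_add_cancel eq_diff_eq)

lemma RR_sum: "RR A x (sum f S) = sum (\<lambda>i. RR A x (f i)) S"
proof (induction S rule: infinite_finite_induct)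
  case (infinite A) then show ?case by (simp add: RR_def)
next
  case empty then show ?case by (simp add: RR_def)
next
  case (insert a F) then show ?case by (simp add: RR_add)
qed



lemma linear_RR: "linear (RR A x)"
  by (simp add: linearI RR_add RR_scale)

lemma RR_bound: "norm (RR A x w) \<le> norm w * (\<Sum>i\<in>UNIV. norm (RR A x (axis i 1)))"
proof -
  have "w = (\<Sum>i\<in>UNIV. (w$i) *\<^sub>R axis i 1)"
    using basis_expansion[of w] by (simp add: scalar_mult_eq_scaleR)
  then have "RR A x w = (\<Sum>i\<in>UNIV. (w$i) *\<^sub>R RR A x (axis i 1))"
    by (metis (no_types, lifting) RR_scale RR_sum sum.cong)
  then have "norm (RR A x w) \<le> (\<Sum>i\<in>UNIV. \<bar>w$i\<bar> * norm (RR A x (axis i 1)))"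
    by (metis (no_types, lifting) norm_scaleR norm_sum sum.cong)
  also have "\<dots> \<le> (\<Sum>i\<in>UNIV. norm w * norm (RR A x (axis i 1)))"
    by (rule sum_mono) (simp add: component_le_norm_cart mult_right_mono)
  finally show ?thesis by (simp add: sum_distrib_left)
qed



lemma sph_deriv:
  fixes A :: "real^'n^'n"
  assumes nz: "A *v x \<noteq> 0"
  shows "((sph_act A) has_derivative
     (\<lambda>v. (1/norm (A *v x)) *\<^sub>R (A *v v) - ((A *v x) \<bullet> (A *v v) / norm (A *v x)^3) *\<^sub>R (A *v x))) (at x)"
proof -
  have lin: "((\<lambda>w. A *v w) has_derivative (\<lambda>v. A *v v)) (at x)"
    by (simp add: bounded_linear_imp_has_derivative matrix_vector_mult_linear_continuous_at
        bounded_linearI' matrix_vector_right_distrib matrix_vector_mult_scaleR)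
  have nrm: "((\<lambda>w. norm (A *v w)) has_derivative (\<lambda>v. (A *v v) \<bullet> sgn (A *v x))) (at x)"
    using has_derivative_compose[OF lin has_derivative_norm[OF nz]] by (simp add: o_def)
  have inv: "((\<lambda>w. inverse (norm (A *v w))) has_derivative
       (\<lambda>v. - (inverse (norm (A *v x)) * ((A *v v) \<bullet> sgn (A *v x)) * inverse (norm (A *v x))))) (at x)"
    using Deriv.has_derivative_inverse[OF _ nrm] nz by simp
  have "((\<lambda>w. inverse (norm (A *v w)) *\<^sub>R (A *v w)) has_derivative
     (\<lambda>v. inverse (norm (A *v x)) *\<^sub>R (A *v v) + (- (inverse (norm (A *v x)) * ((A *v v) \<bullet> sgn (A *v x)) * inverse (norm (A *v x)))) *\<^sub>R (A *v x))) (at x)"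
    by (rule has_derivative_scaleR[OF inv lin])
  moreover have "sph_act A = (\<lambda>w. inverse (norm (A *v w)) *\<^sub>R (A *v w))"
    by (auto simp: sph_act_def fun_eq_iff divide_inverse)
  moreover have "(\<lambda>v. inverse (norm (A *v x)) *\<^sub>R (A *v v) + (- (inverse (norm (A *v x)) * ((A *v v) \<bullet> sgn (A *v x)) * inverse (norm (A *v x)))) *\<^sub>R (A *v x))
     = (\<lambda>v. (1/norm (A *v x)) *\<^sub>R (A *v v) - ((A *v x) \<bullet> (A *v v) / norm (A *v x)^3) *\<^sub>R (A *v x))"
    by (auto simp: fun_eq_iff sgn_div_norm power3_eq_cube divide_inverse algebra_simps inner_commute)
  ultimately show ?thesis by simp
qed

lemma dnorm_RR:
  assumes nz: "A *v x \<noteq> 0"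
  shows "dnorm A x v = norm (RR A x v)"
proof -
  have fd: "frechet_derivative (sph_act A) (at x) =
     (\<lambda>v. (1/norm (A *v x)) *\<^sub>R (A *v v) - ((A *v x) \<bullet> (A *v v) / norm (A *v x)^3) *\<^sub>R (A *v x))"
    by (rule frechet_derivative_at[OF sph_deriv[OF nz], symmetric])
  have "frechet_derivative (sph_act A) (at x) v =
     (1/norm (A *v x)) *\<^sub>R (A *v v) - ((A *v x) \<bullet> (A *v v) / norm (A *v x)^3) *\<^sub>R (A *v x)"
    by (simp only: fd)
  also have "\<dots> = RR A x v"
  proof -
    have a: "aa A x = norm (A *v x)" by (simp add: aa_def)
    have "(cc A x \<bullet> v) *\<^sub>R uu A x = ((A *v x) \<bullet> (A *v v) / norm (A *v x)^3) *\<^sub>R (A *v x)"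
      unfolding cc_dot uu_def a by (simp add: power3_eq_cube)
    then show ?thesis unfolding RR_def a by simp
  qed
  finally show ?thesis by (simp add: dnorm_def)
qed




definition cs :: "real^'n \<Rightarrow> real^'n \<Rightarrow> real" where
  "cs y x = \<bar>y \<bullet> x\<bar> / (norm y * norm x)"

lemma pangle_cs: "pangle y x = arccos (cs y x)"
  by (simp add: pangle_def cs_def)

lemma cs_ge0: "0 \<le> cs y x"
  by (simp add: cs_def)

lemma cs_le1: "cs y x \<le> 1"
proof (cases "norm y * norm x = 0")
  case True then show ?thesis by (cases "y = 0") (auto simp: cs_def)
next
  case False
  then have "norm y * norm x > 0" by simp
  moreover have "\<bar>y \<bullet> x\<bar> \<le> norm y * norm x" by (rule Cauchy_Schwarz_ineq2)
  ultimately show ?thesis by (simp add: cs_def)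
qed

lemma cs_scale: "t \<noteq> 0 \<Longrightarrow> cs (t *\<^sub>R y) x = cs y x"
  by (simp add: cs_def abs_mult)

lemma cos_pangle: "cos (pangle y x) = cs y x"
  using cs_ge0[of y x] cs_le1[of y x] by (simp add: pangle_cs)

lemma pangle_lt:
  assumes "0 < \<epsilon>"
  shows "\<exists>\<theta>>0. \<forall>y. cs y x > 1 - \<theta> \<longrightarrow> pangle y x < \<epsilon>"
proof -
  define e where "e = min \<epsilon> 1"
  have e: "0 < e" "e \<le> 1" "e \<le> \<epsilon>" using assms by (auto simp: e_def)
  have pi: "e \<le> pi" using e(2) pi_gt3 by linarith
  have "cos e < cos 0" by (rule cos_monotone_0_pi) (use e pi in auto)
  then have ce: "cos e < 1" by simp
  show ?thesis
  proof (intro exI conjI allI impI)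
    show "0 < 1 - cos e" using ce by simp
    fix y assume "1 - (1 - cos e) < cs y x"
    then have "cos e < cs y x" by simp
    then have "arccos (cs y x) < arccos (cos e)"
      by (intro arccos_less_arccos) (use cs_le1[of y x] cos_ge_minus_one[of e] in auto)
    also have "\<dots> = e" using e pi by (simp add: arccos_cos)
    finally show "pangle y x < \<epsilon>" using e by (simp add: pangle_cs)
  qed
qed

lemma pangle_tendsto_cs:
  assumes "(\<lambda>k. pangle (f k) x) \<longlonglongrightarrow> 0"
  shows "(\<lambda>k. cs (f k) x) \<longlonglongrightarrow> 1"
proof -
  have "(\<lambda>k. cos (pangle (f k) x)) \<longlonglongrightarrow> cos 0"
    by (intro tendsto_cos assms)
  then show ?thesis by (simp add: cos_pangle)
qed

lemma pangle_self: "x \<noteq> 0 \<Longrightarrow> pangle x x = 0"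
proof -
  assume "x \<noteq> 0"
  then have "cs x x = 1" by (simp add: cs_def dot_square_norm power2_eq_square)
  then show ?thesis by (simp add: pangle_cs)
qed

lemma est:
  fixes u x R :: "real^'n"
  assumes u: "norm u = 1" and x: "norm x = 1" and ph: "\<phi> \<noteq> 0"
    and R: "norm R \<le> r * \<bar>\<phi>\<bar>" and r: "0 \<le> r"
  shows "cs (\<phi> *\<^sub>R u + R) x \<ge> (\<bar>u \<bullet> x\<bar> - r) / (1 + r)"
proof (cases "\<bar>u \<bullet> x\<bar> - r \<le> 0")
  case True
  then have "(\<bar>u \<bullet> x\<bar> - r) / (1 + r) \<le> 0" using r by (simp add: divide_nonpos_pos)
  then show ?thesis using cs_ge0 order_trans by blast
next
  case False
  define z where "z = \<phi> *\<^sub>R u + R"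
  have Rx: "\<bar>R \<bullet> x\<bar> \<le> r * \<bar>\<phi>\<bar>"
    using Cauchy_Schwarz_ineq2[of R x] x R by simp
  have zx: "z \<bullet> x = \<phi> * (u \<bullet> x) + R \<bullet> x" by (simp add: z_def inner_add_left)
  have h1: "\<bar>z \<bullet> x\<bar> \<ge> \<bar>\<phi>\<bar> * (\<bar>u \<bullet> x\<bar> - r)"
  proof -
    have "\<bar>z \<bullet> x\<bar> \<ge> \<bar>\<phi> * (u \<bullet> x)\<bar> - \<bar>R \<bullet> x\<bar>" unfolding zx by linarith
    then show ?thesis using Rx by (simp add: abs_mult algebra_simps)
  qed
  have h2: "norm z \<le> \<bar>\<phi>\<bar> * (1 + r)"
  proof -
    have "norm z \<le> norm (\<phi> *\<^sub>R u) + norm R" unfolding z_def by (rule norm_triangle_ineq)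
    then show ?thesis using u R by (simp add: algebra_simps)
  qed
  have pos: "0 < \<bar>\<phi>\<bar> * (\<bar>u \<bullet> x\<bar> - r)" using False ph by simp
  then have "z \<bullet> x \<noteq> 0" using h1 by linarith
  then have "z \<noteq> 0" by auto
  then have zpos: "0 < norm z" by simp
  have "(\<bar>\<phi>\<bar> * (\<bar>u \<bullet> x\<bar> - r)) / (\<bar>\<phi>\<bar> * (1 + r)) \<le> \<bar>z \<bullet> x\<bar> / norm z"
    by (rule frac_le) (use pos h1 h2 zpos in auto)
  moreover have "(\<bar>\<phi>\<bar> * (\<bar>u \<bullet> x\<bar> - r)) / (\<bar>\<phi>\<bar> * (1 + r)) = (\<bar>u \<bullet> x\<bar> - r) / (1 + r)"
    using ph by simp
  ultimately show ?thesis by (simp add: cs_def x z_def)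
qed

lemma sub_cond1:
  assumes c1: "\<forall>xs. (\<forall>k. xs k \<in> X) \<and> (\<lambda>k. pangle (xs k) x) \<longlonglongrightarrow> 0
                   \<longrightarrow> (\<lambda>k. pangle (g k *v xs k) x) \<longlonglongrightarrow> 0"
    and xX: "x \<in> X" and x0: "x \<noteq> 0" and \<sigma>: "strict_mono \<sigma>"
    and ys: "\<forall>j. ys j \<in> X" and yl: "(\<lambda>j. pangle (ys j) x) \<longlonglongrightarrow> 0"
  shows "(\<lambda>j. pangle (g (\<sigma> j) *v ys j) x) \<longlonglongrightarrow> 0"
proof -
  define xs where "xs k = (if k \<in> range \<sigma> then ys (inv \<sigma> k) else x)" for k
  have inj: "inj \<sigma>" using \<sigma> strict_mono_imp_inj_on by blast
  have xs\<sigma>: "xs (\<sigma> j) = ys j" for j using inj by (simp add: xs_def)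
  have xsX: "\<forall>k. xs k \<in> X" using ys xX by (simp add: xs_def)
  have "(\<lambda>k. pangle (xs k) x) \<longlonglongrightarrow> 0"
  proof (rule LIMSEQ_I)
    fix e :: real assume e: "0 < e"
    obtain J where J: "\<forall>j\<ge>J. norm (pangle (ys j) x - 0) < e"
      using LIMSEQ_D[OF yl e] by blast
    show "\<exists>N. \<forall>k\<ge>N. norm (pangle (xs k) x - 0) < e"
    proof (intro exI allI impI)
      fix k assume k: "\<sigma> J \<le> k"
      show "norm (pangle (xs k) x - 0) < e"
      proof (cases "k \<in> range \<sigma>")
        case True
        then obtain j where kj: "k = \<sigma> j" by blast
        then have "J \<le> j" using k \<sigma> by (simp add: strict_mono_less_eq)
        then show ?thesis using J kj xs\<sigma> by simp
      next
        case False
        then show ?thesis using e x0 by (simp add: xs_def pangle_self)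
      qed
    qed
  qed
  then have "(\<lambda>k. pangle (g k *v xs k) x) \<longlonglongrightarrow> 0" using c1 xsX by blast
  from LIMSEQ_subseq_LIMSEQ[OF this \<sigma>] show ?thesis by (simp add: o_def xs\<sigma>)
qed

lemma unbounded_subseq:
  fixes f :: "nat \<Rightarrow> 'a::real_normed_vector"
  assumes nb: "\<not> bounded (range f)"
  shows "\<exists>\<sigma>. strict_mono \<sigma> \<and> (\<forall>j. norm (f (\<sigma> j)) > real j)"
proof -
  have H: "\<forall>M n. \<exists>k\<ge>n. norm (f k) > M"
  proof (rule ccontr)
    assume "\<not> ?thesis"
    then obtain M n where Mn: "\<forall>k\<ge>n. norm (f k) \<le> M" by (auto simp: not_less)
    have "\<forall>k. norm (f k) \<le> \<bar>M\<bar> + (\<Sum>i<n. norm (f i))"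
    proof
      fix k show "norm (f k) \<le> \<bar>M\<bar> + (\<Sum>i<n. norm (f i))"
      proof (cases "k < n")
        case True
        then have "norm (f k) \<le> (\<Sum>i<n. norm (f i))"
          by (intro member_le_sum) auto
        then show ?thesis by simp
      next
        case False
        then have "norm (f k) \<le> M" using Mn by simp
        moreover have "0 \<le> (\<Sum>i<n. norm (f i))" by (intro sum_nonneg) auto
        ultimately show ?thesis by linarith
      qed
    qed
    then have "bounded (range f)" by (auto simp: bounded_iff)
    then show False using nb by simp
  qed
  obtain pick where pick: "\<And>M n. pick M n \<ge> n \<and> norm (f (pick M n)) > M"
    using H by metis
  define \<sigma> where "\<sigma> = rec_nat (pick 0 0) (\<lambda>j s. pick (real (Suc j)) (Suc s))"
  have s0: "\<sigma> 0 = pick 0 0" and sS: "\<sigma> (Suc j) = pick (real (Suc j)) (Suc (\<sigma> j))" for j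
    by (simp_all add: \<sigma>_def)
  have "strict_mono \<sigma>"
    unfolding strict_mono_Suc_iff using pick sS by (metis Suc_le_lessD)
  moreover have "norm (f (\<sigma> j)) > real j" for j
    by (cases j) (use pick s0 sS in auto)
  ultimately show ?thesis by blast
qed




lemma assemble:
  fixes G :: "nat \<Rightarrow> real^'n^'n" and x c0 :: "real^'n" and K :: "(real^'n) set"
  assumes nz: "\<forall>k. G k *v x \<noteq> 0" and xu: "norm x = 1"
    and ux: "(\<lambda>k. \<bar>uu (G k) x \<bullet> x\<bar>) \<longlonglongrightarrow> 1"
    and cl: "(\<lambda>k. cc (G k) x) \<longlonglongrightarrow> c0"
    and Rl: "\<forall>w. (\<lambda>k. RR (G k) x w) \<longlonglongrightarrow> 0"
    and Kc: "compact K" and Kn: "\<forall>w\<in>K. c0 \<bullet> w \<noteq> 0"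
  shows "\<forall>\<epsilon>>0. eventually (\<lambda>k. \<forall>y\<in>K. pangle (G k *v y) x < \<epsilon>) sequentially"
proof (intro allI impI)
  fix \<epsilon> :: real assume "\<epsilon> > 0"
  then obtain \<theta> where th: "\<theta> > 0" "\<And>y. cs y x > 1 - \<theta> \<Longrightarrow> pangle y x < \<epsilon>"
    using pangle_lt by blast
  show "eventually (\<lambda>k. \<forall>y\<in>K. pangle (G k *v y) x < \<epsilon>) sequentially"
  proof (cases "K = {}")
    case True then show ?thesis by simp
  next
    case False
    have "continuous_on K (\<lambda>w. \<bar>c0 \<bullet> w\<bar>)" by (intro continuous_intros)
    then obtain w0 where w0: "w0 \<in> K" "\<And>w. w \<in> K \<Longrightarrow> \<bar>c0 \<bullet> w0\<bar> \<le> \<bar>c0 \<bullet> w\<bar>"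
      using continuous_attains_inf[OF Kc False] by blast
    define \<delta> where "\<delta> = \<bar>c0 \<bullet> w0\<bar>"
    have dpos: "\<delta> > 0" using Kn w0 by (simp add: \<delta>_def)
    obtain B where B: "B > 0" "\<And>w. w \<in> K \<Longrightarrow> norm w \<le> B"
      using compact_imp_bounded[OF Kc] unfolding bounded_pos by blast
    define \<rho> where "\<rho> k = (\<Sum>i\<in>UNIV. norm (RR (G k) x (axis i 1)))" for k
    have rl: "\<rho> \<longlonglongrightarrow> 0"
    proof -
      have "(\<lambda>k. \<Sum>i\<in>UNIV. norm (RR (G k) x (axis i 1))) \<longlonglongrightarrow> (\<Sum>i\<in>(UNIV::'n set). 0)"
        by (intro tendsto_sum tendsto_norm_zero) (use Rl in blast)
      moreover have "\<rho> = (\<lambda>k. \<Sum>i\<in>UNIV. norm (RR (G k) x (axis i 1)))" by (simp add: fun_eq_iff \<rho>_def)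
      ultimately show ?thesis by simp
    qed
    define t where "t = \<theta> / 3"
    have tpos: "t > 0" using th by (simp add: t_def)
    have E1: "eventually (\<lambda>k. \<bar>uu (G k) x \<bullet> x\<bar> > 1 - t) sequentially"
      using order_tendstoD(1)[OF ux] tpos by simp
    have E2: "eventually (\<lambda>k. dist (cc (G k) x) c0 < \<delta> / (2 * B)) sequentially"
      using cl dpos B(1) by (simp add: tendsto_iff)
    have E3: "eventually (\<lambda>k. \<rho> k < t * \<delta> / (2 * B)) sequentially"
      using order_tendstoD(2)[OF rl] tpos dpos B(1) by simp
    show ?thesis
    proof (rule eventually_mono[OF eventually_conj[OF E1 eventually_conj[OF E2 E3]]])
      fix k assume hk: "1 - t < \<bar>uu (G k) x \<bullet> x\<bar> \<and> dist (cc (G k) x) c0 < \<delta> / (2 * B) \<and> \<rho> k < t * \<delta> / (2 * B)"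
      show "\<forall>y\<in>K. pangle (G k *v y) x < \<epsilon>"
      proof
        fix y assume yK: "y \<in> K"
        define \<phi> where "\<phi> = cc (G k) x \<bullet> y"
        have ny: "norm y \<le> B" using B yK by simp
        have c0y: "\<bar>c0 \<bullet> y\<bar> \<ge> \<delta>" using w0 yK by (simp add: \<delta>_def)
        have "\<bar>(cc (G k) x - c0) \<bullet> y\<bar> \<le> norm (cc (G k) x - c0) * norm y"
          by (rule Cauchy_Schwarz_ineq2)
        also have "\<dots> \<le> (\<delta> / (2 * B)) * B"
          using hk ny dpos B(1) by (intro mult_mono) (auto simp: dist_norm)
        also have "\<dots> = \<delta> / 2" using B by simp
        finally have "\<bar>\<phi> - c0 \<bullet> y\<bar> \<le> \<delta> / 2" by (simp add: \<phi>_def inner_diff_left)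
        then have ph: "\<bar>\<phi>\<bar> \<ge> \<delta> / 2" using c0y by linarith
        then have ph0: "\<phi> \<noteq> 0" using dpos by auto
        have "norm (RR (G k) x y) \<le> norm y * \<rho> k" unfolding \<rho>_def by (rule RR_bound)
        also have "\<dots> \<le> B * (t * \<delta> / (2 * B))"
          using hk ny B(1) by (intro mult_mono) (auto simp: \<rho>_def intro: sum_nonneg)
        also have "\<dots> = t * (\<delta> / 2)" using B by simp
        also have "\<dots> \<le> t * \<bar>\<phi>\<bar>" using ph tpos by simp
        finally have Rb: "norm (RR (G k) x y) \<le> t * \<bar>\<phi>\<bar>" .
        have "cs (\<phi> *\<^sub>R uu (G k) x + RR (G k) x y) x \<ge> (\<bar>uu (G k) x \<bullet> x\<bar> - t) / (1 + t)"
          by (rule est) (use uu_norm nz xu ph0 Rb tpos in auto)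
        moreover have "(\<bar>uu (G k) x \<bullet> x\<bar> - t) / (1 + t) > 1 - \<theta>"
        proof -
          have "(\<bar>uu (G k) x \<bullet> x\<bar> - t) / (1 + t) > (1 - 2 * t) / (1 + t)"
            using hk tpos by (intro divide_strict_right_mono) auto
          moreover have "(1 - 2 * t) / (1 + t) \<ge> 1 - 3 * t"
            using tpos by (simp add: field_simps)
          ultimately show ?thesis by (simp add: t_def)
        qed
        moreover have "cs (G k *v y) x = cs (\<phi> *\<^sub>R uu (G k) x + RR (G k) x y) x"
          using decomp[of "G k" x y] nz aa_pos[of "G k" x] by (simp add: cs_scale \<phi>_def)
        ultimately show "pangle (G k *v y) x < \<epsilon>" using th by simp
      qed
    qed
  qed
qed




lemma inv_nz:
  fixes A :: "real^'n^'n"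
  assumes "invertible A" "w \<noteq> 0" shows "A *v w \<noteq> 0"
proof
  assume h: "A *v w = 0"
  obtain B where B: "B ** A = mat 1" using assms(1) invertible_left_inverse by blast
  have "w = B *v (A *v w)" by (simp add: matrix_vector_mul_assoc B)
  then show False using h assms(2) by simp
qed

lemma cs_to_pangle:
  assumes "(\<lambda>k. cs (f k) x) \<longlonglongrightarrow> 1"
  shows "(\<lambda>k. pangle (f k) x) \<longlonglongrightarrow> 0"
  unfolding tendsto_iff
proof (intro allI impI)
  fix e :: real assume e: "0 < e"
  obtain \<theta> where th: "\<theta> > 0" "\<And>y. cs y x > 1 - \<theta> \<Longrightarrow> pangle y x < e"
    using pangle_lt[OF e] by blast
  have "eventually (\<lambda>k. cs (f k) x > 1 - \<theta>) sequentially"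
    using order_tendstoD(1)[OF assms] th(1) by simp
  then show "eventually (\<lambda>k. dist (pangle (f k) x) 0 < e) sequentially"
  proof (rule eventually_mono)
    fix k assume "cs (f k) x > 1 - \<theta>"
    then have "pangle (f k) x < e" using th by blast
    moreover have "pangle (f k) x \<ge> 0"
      unfolding pangle_cs by (rule arccos_lbound) (use cs_ge0[of "f k" x] cs_le1[of "f k" x] in auto)
    ultimately show "dist (pangle (f k) x) 0 < e" by simp
  qed
qed

lemma ux_lim:
  assumes nz: "\<forall>k. g k *v x \<noteq> 0" and xu: "norm x = 1"
    and pl: "(\<lambda>k. pangle (g k *v x) x) \<longlonglongrightarrow> 0"
  shows "(\<lambda>k. \<bar>uu (g k) x \<bullet> x\<bar>) \<longlonglongrightarrow> 1"
proof -
  have "(\<lambda>k. cs (g k *v x) x) \<longlonglongrightarrow> 1" by (rule pangle_tendsto_cs[OF pl])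
  moreover have "cs (g k *v x) x = \<bar>uu (g k) x \<bullet> x\<bar>" for k
  proof -
    have "g k *v x = aa (g k) x *\<^sub>R uu (g k) x"
      using aa_pos[of "g k" x] nz by (simp add: uu_def)
    moreover have "aa (g k) x \<noteq> 0" using aa_pos[of "g k" x] nz by force
    ultimately have "cs (g k *v x) x = cs (uu (g k) x) x"
      using cs_scale by metis
    then show ?thesis using uu_norm[of "g k" x] nz xu by (simp add: cs_def)
  qed
  ultimately show ?thesis by simp
qed

lemma R_to0:
  fixes f T :: "nat \<Rightarrow> real"
  assumes l: "(\<lambda>k. ln (f k) / T k) \<longlonglongrightarrow> -1"
    and Tl: "filterlim T at_top sequentially" and Tp: "\<forall>k. T k > 0" and f0: "\<forall>k. f k \<ge> 0"
  shows "f \<longlonglongrightarrow> 0"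
  unfolding tendsto_iff
proof (intro allI impI)
  fix e :: real assume e: "0 < e"
  have E1: "eventually (\<lambda>k. ln (f k) / T k < -1/2) sequentially"
    using order_tendstoD(2)[OF l] by simp
  have E2: "eventually (\<lambda>k. T k \<ge> -2 * ln e) sequentially"
    using Tl by (simp add: filterlim_at_top)
  show "eventually (\<lambda>k. dist (f k) 0 < e) sequentially"
  proof (rule eventually_mono[OF eventually_conj[OF E1 E2]])
    fix k assume h: "ln (f k) / T k < -1/2 \<and> T k \<ge> -2 * ln e"
    have Tk: "T k > 0" using Tp by simp
    have "ln (f k) < - T k / 2" using h Tk by (simp add: divide_less_eq)
    then have lf: "ln (f k) < ln e" using h by linarith
    show "dist (f k) 0 < e"
    proof (cases "f k = 0")
      case True then show ?thesis using e by simp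
    next
      case False
      then have "f k > 0" using f0 by (simp add: less_le)
      then have "f k < e" using lf e by simp
      then show ?thesis using f0 by simp
    qed
  qed
qed

lemma perp_cs:
  fixes u x R :: "real^'n"
  assumes u: "norm u = 1" and x: "norm x = 1" and p: "u \<bullet> R = 0"
  shows "(cs R x)^2 \<le> 1 - (u \<bullet> x)^2"
proof (cases "R = 0")
  case True
  have "(u \<bullet> x)^2 \<le> 1"
    using Cauchy_Schwarz_ineq2[of u x] u x by (simp add: abs_square_le_1)
  then show ?thesis using True by (simp add: cs_def)
next
  case False
  define r where "r = (1 / norm R) *\<^sub>R R"
  have r1: "r \<bullet> r = 1" using False by (simp add: r_def dot_square_norm power2_eq_square)
  have u1: "u \<bullet> u = 1" using u by (simp add: dot_square_norm)
  have ur: "u \<bullet> r = 0" using p by (simp add: r_def)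
  have x1: "x \<bullet> x = 1" using x by (simp add: dot_square_norm)
  have "0 \<le> (x - (u \<bullet> x) *\<^sub>R u - (r \<bullet> x) *\<^sub>R r) \<bullet> (x - (u \<bullet> x) *\<^sub>R u - (r \<bullet> x) *\<^sub>R r)"
    by simp
  also have "\<dots> = 1 - (u \<bullet> x)^2 - (r \<bullet> x)^2"
    using r1 u1 ur x1
    by (simp add: inner_diff_left inner_diff_right inner_commute power2_eq_square algebra_simps)
  finally have "(r \<bullet> x)^2 \<le> 1 - (u \<bullet> x)^2" by simp
  moreover have "cs R x = \<bar>r \<bullet> x\<bar>" using False x by (simp add: cs_def r_def)
  ultimately show ?thesis by simp
qed

lemma badseq:
  fixes g :: "nat \<Rightarrow> real^'n^'n"
  assumes nz: "\<forall>k. g k *v x \<noteq> 0" and xu: "norm x = 1"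
    and ux: "(\<lambda>k. \<bar>uu (g k) x \<bullet> x\<bar>) \<longlonglongrightarrow> 1"
    and \<sigma>: "strict_mono \<sigma>"
    and pl: "(\<lambda>j. pangle (g (\<sigma> j) *v ys j) x) \<longlonglongrightarrow> 0"
    and orth: "\<forall>j. cc (g (\<sigma> j)) x \<bullet> ys j = 0"
  shows False
proof -
  have c1: "(\<lambda>j. (cs (g (\<sigma> j) *v ys j) x)^2) \<longlonglongrightarrow> 1^2"
    by (intro tendsto_power pangle_tendsto_cs[OF pl])
  have uxs: "(\<lambda>j. \<bar>uu (g (\<sigma> j)) x \<bullet> x\<bar>) \<longlonglongrightarrow> 1"
    using LIMSEQ_subseq_LIMSEQ[OF ux \<sigma>] by (simp add: o_def)
  have b: "(\<lambda>j. 1 - \<bar>uu (g (\<sigma> j)) x \<bullet> x\<bar>^2) \<longlonglongrightarrow> 1 - 1^2"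
    by (intro tendsto_diff tendsto_const tendsto_power uxs)
  have le: "(cs (g (\<sigma> j) *v ys j) x)^2 \<le> 1 - \<bar>uu (g (\<sigma> j)) x \<bullet> x\<bar>^2" for j
  proof -
    have "g (\<sigma> j) *v ys j = aa (g (\<sigma> j)) x *\<^sub>R RR (g (\<sigma> j)) x (ys j)"
      using decomp[of "g (\<sigma> j)" x "ys j"] nz orth by simp
    moreover have "aa (g (\<sigma> j)) x \<noteq> 0" using aa_pos[of "g (\<sigma> j)" x] nz by force
    ultimately have "cs (g (\<sigma> j) *v ys j) x = cs (RR (g (\<sigma> j)) x (ys j)) x"
      using cs_scale by metis
    then show ?thesis using perp_cs[OF uu_norm xu uu_RR] nz by simp
  qed
  have "1^2 \<le> (1 - 1^2 :: real)"
    by (rule LIMSEQ_le[OF c1 b]) (use le in auto)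
  then show False by simp
qed




lemma final_step:
  fixes g :: "nat \<Rightarrow> real^'n^'n"
  assumes nz: "\<forall>k. g k *v x \<noteq> 0" and xu: "norm x = 1"
    and ux: "(\<lambda>k. \<bar>uu (g k) x \<bullet> x\<bar>) \<longlonglongrightarrow> 1"
    and Rl: "\<forall>w. (\<lambda>k. RR (g k) x w) \<longlonglongrightarrow> 0"
    and bd: "bounded (range (\<lambda>k. cc (g k) x))"
  shows "\<exists>r c0. strict_mono r \<and> (\<lambda>k. cc (g (r k)) x) \<longlonglongrightarrow> c0 \<and> c0 \<bullet> x = 1 \<and>
     (\<forall>K. compact K \<and> (\<forall>w\<in>K. c0 \<bullet> w \<noteq> 0) \<longrightarrow>
        (\<forall>\<epsilon>>0. eventually (\<lambda>k. \<forall>y\<in>K. pangle (g (r k) *v y) x < \<epsilon>) sequentially))"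
proof -
  obtain c0 r where r: "strict_mono r" and cl: "((\<lambda>k. cc (g k) x) \<circ> r) \<longlonglongrightarrow> c0"
    using bounded_imp_convergent_subsequence[OF bd] by blast
  have cl': "(\<lambda>k. cc (g (r k)) x) \<longlonglongrightarrow> c0" using cl by (simp add: o_def)
  have "(\<lambda>k. cc (g (r k)) x \<bullet> x) \<longlonglongrightarrow> c0 \<bullet> x" by (intro tendsto_inner cl' tendsto_const)
  moreover have "(\<lambda>k. cc (g (r k)) x \<bullet> x) = (\<lambda>k. 1)"
  proof -
    have "\<forall>k. cc (g k) x \<bullet> x = 1" using nz cc_x by blast
    then show ?thesis by (simp add: fun_eq_iff)
  qed
  ultimately have "(\<lambda>k. 1::real) \<longlonglongrightarrow> c0 \<bullet> x" by simp
  then have c0x: "c0 \<bullet> x = 1" by (rule LIMSEQ_unique[OF tendsto_const, symmetric])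
  have nz': "\<forall>k. g (r k) *v x \<noteq> 0" using nz by simp
  have ux': "(\<lambda>k. \<bar>uu (g (r k)) x \<bullet> x\<bar>) \<longlonglongrightarrow> 1"
    using LIMSEQ_subseq_LIMSEQ[OF ux r] by (simp add: o_def)
  have Rl': "\<forall>w. (\<lambda>k. RR (g (r k)) x w) \<longlonglongrightarrow> 0"
  proof
    fix w
    have "(\<lambda>k. RR (g k) x w) \<longlonglongrightarrow> 0" using Rl by blast
    from LIMSEQ_subseq_LIMSEQ[OF this r] show "(\<lambda>k. RR (g (r k)) x w) \<longlonglongrightarrow> 0" by (simp add: o_def)
  qed
  show ?thesis
  proof (intro exI conjI allI impI)
    show "strict_mono r" by fact
    show "(\<lambda>k. cc (g (r k)) x) \<longlonglongrightarrow> c0" by fact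
    show "c0 \<bullet> x = 1" by fact
    fix K :: "(real^'n) set" and \<epsilon> :: real
    assume K: "compact K \<and> (\<forall>w\<in>K. c0 \<bullet> w \<noteq> 0)" and e: "\<epsilon> > 0"
    have Kc: "compact K" and Kn: "\<forall>w\<in>K. c0 \<bullet> w \<noteq> 0" using K by auto
    show "eventually (\<lambda>k. \<forall>y\<in>K. pangle (g (r k) *v y) x < \<epsilon>) sequentially"
      using assemble[OF nz' xu ux' cl' Rl' Kc Kn] e by simp
  qed
qed

lemma Rtan_to0:
  fixes g :: "nat \<Rightarrow> real^'n^'n"
  assumes nz: "\<forall>k. g k *v x \<noteq> 0"
    and Tpos: "\<forall>k. T k > 0" and Tlim: "filterlim T at_top sequentially"
    and c2: "v \<noteq> 0 \<longrightarrow> (\<lambda>k. ln (dnorm (g k) x v) / T k) \<longlonglongrightarrow> -1"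
  shows "(\<lambda>k. RR (g k) x v) \<longlonglongrightarrow> 0"
proof (cases "v = 0")
  case True
  then show ?thesis using RR_scale[of _ x 0 0] by simp
next
  case False
  then have "(\<lambda>k. ln (norm (RR (g k) x v)) / T k) \<longlonglongrightarrow> -1"
  proof -
    have "\<forall>k. dnorm (g k) x v = norm (RR (g k) x v)" using dnorm_RR nz by blast
    then show ?thesis using c2 False by simp
  qed
  then have "(\<lambda>k. norm (RR (g k) x v)) \<longlonglongrightarrow> 0"
    by (rule R_to0) (use Tpos Tlim in auto)
  then show ?thesis by (rule tendsto_norm_zero_cancel)
qed

lemma rp_case:
  fixes g :: "nat \<Rightarrow> real^'n^'n" and T :: "nat \<Rightarrow> real" and x :: "real^'n"
  assumes gG: "\<forall>k. g k \<in> PGL_lifts"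
    and Tpos: "\<forall>k. T k > 0"
    and Tlim: "filterlim T at_top sequentially"
    and xu: "norm x = 1"
    and cond1: "\<forall>xs. (\<forall>k. xs k \<in> RP_space) \<and> (\<lambda>k. pangle (xs k) x) \<longlonglongrightarrow> 0
                   \<longrightarrow> (\<lambda>k. pangle (g k *v xs k) x) \<longlonglongrightarrow> 0"
    and cond2: "\<forall>v\<in>RP_tangent x. v \<noteq> 0 \<longrightarrow>
                   (\<lambda>k. ln (dnorm (g k) x v) / T k) \<longlonglongrightarrow> -1"
  shows "\<exists>r. strict_mono r \<and>
           (\<exists>W\<in>affine_charts. x \<in> W \<and>
              (\<forall>K. compact K \<and> K \<subseteq> W \<longrightarrow>
                 (\<forall>\<epsilon>>0. eventually (\<lambda>k. \<forall>y\<in>K. pangle (g (r k) *v y) x < \<epsilon>)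
                          sequentially)))"
proof -
  have x0: "x \<noteq> 0" using xu by auto
  have xX: "x \<in> RP_space" using x0 by (simp add: RP_space_def)
  have nz: "\<forall>k. g k *v x \<noteq> 0" using gG x0 inv_nz by (auto simp: PGL_lifts_def)
  have "(\<lambda>k. pangle (g k *v x) x) \<longlonglongrightarrow> 0"
    using cond1[rule_format, of "\<lambda>k. x"] xX pangle_self[OF x0] by simp
  then have ux: "(\<lambda>k. \<bar>uu (g k) x \<bullet> x\<bar>) \<longlonglongrightarrow> 1" by (rule ux_lim[OF nz xu])
  have Rt: "(\<lambda>k. RR (g k) x v) \<longlonglongrightarrow> 0" if "v \<bullet> x = 0" for v
    by (rule Rtan_to0[OF nz Tpos Tlim]) (use cond2 that in \<open>auto simp: RP_tangent_def\<close>)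
  have Rl: "\<forall>w. (\<lambda>k. RR (g k) x w) \<longlonglongrightarrow> 0"
  proof
    fix w :: "real^'n"
    have xx: "x \<bullet> x = 1" using xu by (simp add: dot_square_norm)
    have "(\<lambda>k. RR (g k) x (w - (w \<bullet> x) *\<^sub>R x)) \<longlonglongrightarrow> 0"
      by (rule Rt) (simp add: inner_diff_left xx)
    moreover have "RR (g k) x (w - (w \<bullet> x) *\<^sub>R x) = RR (g k) x w" for k
      using nz by (simp add: RR_diff RR_scale RR_x)
    ultimately show "(\<lambda>k. RR (g k) x w) \<longlonglongrightarrow> 0" by simp
  qed
  have bd: "bounded (range (\<lambda>k. cc (g k) x))"
  proof (rule ccontr)
    assume "\<not> ?thesis"
    then obtain \<sigma>0 where s0: "strict_mono \<sigma>0" "\<forall>j. norm (cc (g (\<sigma>0 j)) x) > real j"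
      using unbounded_subseq by blast
    define \<sigma> where "\<sigma> j = \<sigma>0 (j + 2)" for j
    have \<sigma>: "strict_mono \<sigma>" using s0(1) by (simp add: strict_mono_def \<sigma>_def)
    define c where "c j = cc (g (\<sigma> j)) x" for j
    define p where "p j = c j - x" for j
    define ys where "ys j = x - (1 / (norm (p j))^2) *\<^sub>R p j" for j
    have xx: "x \<bullet> x = 1" using xu by (simp add: dot_square_norm)
    have cx: "c j \<bullet> x = 1" for j unfolding c_def using cc_x nz by blast
    have px: "p j \<bullet> x = 0" for j by (simp add: p_def inner_diff_left cx xx)
    have cn: "norm (c j) > real j + 2" for j
      using s0(2)[rule_format, of "j+2"] by (simp add: c_def \<sigma>_def)
    have pn: "norm (p j) > real j + 1" for j
    proof -
      have "norm (c j) \<le> norm (p j) + norm x" unfolding p_def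
        by (metis diff_add_cancel norm_triangle_ineq)
      then show ?thesis using cn[of j] xu by simp
    qed
    have pn0: "p j \<noteq> 0" for j using pn[of j] by auto
    have cp: "c j \<bullet> p j = (norm (p j))^2" for j
    proof -
      have "c j = p j + x" by (simp add: p_def)
      then have "c j \<bullet> p j = p j \<bullet> p j + x \<bullet> p j" by (simp add: inner_add_left)
      also have "x \<bullet> p j = 0" using px[of j] by (simp add: inner_commute)
      finally show ?thesis by (simp add: dot_square_norm)
    qed
    have orth: "\<forall>j. cc (g (\<sigma> j)) x \<bullet> ys j = 0"
    proof
      fix j
      have "c j \<bullet> ys j = c j \<bullet> x - (1 / (norm (p j))^2) * (c j \<bullet> p j)"
        by (simp add: ys_def inner_diff_right)
      also have "\<dots> = 0" using cx[of j] cp[of j] pn0[of j] by simp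
      finally show "cc (g (\<sigma> j)) x \<bullet> ys j = 0" by (simp add: c_def)
    qed
    have ysx: "ys j \<bullet> x = 1" for j by (simp add: ys_def inner_diff_left px xx)
    have ysX: "\<forall>j. ys j \<in> RP_space"
    proof
      fix j show "ys j \<in> RP_space" using ysx[of j] by (auto simp: RP_space_def)
    qed
    define rr where "rr j = 1 / norm (p j)" for j
    have rr0: "rr j \<ge> 0" for j by (simp add: rr_def)
    have rrb: "rr j \<le> inverse (real (Suc j))" for j
      using pn[of j] by (simp add: rr_def divide_simps)
    have rrl: "rr \<longlonglongrightarrow> 0"
      by (rule tendsto_sandwich[of "\<lambda>j. 0" _ _ "\<lambda>j. inverse (real (Suc j))"])
         (use rr0 rrb LIMSEQ_inverse_real_of_nat in auto)
    have csb: "cs (ys j) x \<ge> (1 - rr j) / (1 + rr j)" for j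
    proof -
      have "ys j = 1 *\<^sub>R x + (- (1 / (norm (p j))^2) *\<^sub>R p j)" by (simp add: ys_def)
      moreover have "cs (1 *\<^sub>R x + (- (1 / (norm (p j))^2) *\<^sub>R p j)) x \<ge> (\<bar>x \<bullet> x\<bar> - rr j) / (1 + rr j)"
        by (rule est) (use xu rr0 pn0 in \<open>auto simp: rr_def power2_eq_square\<close>)
      ultimately show ?thesis by (simp add: xx)
    qed
    have "(\<lambda>j. (1 - rr j) / (1 + rr j)) \<longlonglongrightarrow> (1 - 0) / (1 + 0)"
      by (intro tendsto_divide tendsto_diff tendsto_add tendsto_const rrl) simp
    then have lo: "(\<lambda>j. (1 - rr j) / (1 + rr j)) \<longlonglongrightarrow> 1" by simp
    have ev1: "eventually (\<lambda>j. (1 - rr j) / (1 + rr j) \<le> cs (ys j) x) sequentially"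
      by (rule always_eventually) (use csb in blast)
    have ev2: "eventually (\<lambda>j. cs (ys j) x \<le> 1) sequentially"
      by (rule always_eventually) (use cs_le1 in blast)
    have "(\<lambda>j. cs (ys j) x) \<longlonglongrightarrow> 1"
      by (rule tendsto_sandwich[OF ev1 ev2 lo tendsto_const])
    then have "(\<lambda>j. pangle (ys j) x) \<longlonglongrightarrow> 0" by (rule cs_to_pangle)
    then have "(\<lambda>j. pangle (g (\<sigma> j) *v ys j) x) \<longlonglongrightarrow> 0"
      by (rule sub_cond1[OF cond1 xX x0 \<sigma> ysX])
    then show False by (rule badseq[OF nz xu ux \<sigma> _ orth])
  qed
  have "\<exists>r c0. strict_mono r \<and> (\<lambda>k. cc (g (r k)) x) \<longlonglongrightarrow> c0 \<and> c0 \<bullet> x = 1 \<and>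
     (\<forall>K. compact K \<and> (\<forall>w\<in>K. c0 \<bullet> w \<noteq> 0) \<longrightarrow>
        (\<forall>\<epsilon>>0. eventually (\<lambda>k. \<forall>y\<in>K. pangle (g (r k) *v y) x < \<epsilon>) sequentially))"
    by (rule final_step[OF nz xu ux Rl bd])
  then obtain r c0 where r: "strict_mono r" and c0x: "c0 \<bullet> x = 1"
    and conv: "\<forall>K. compact K \<and> (\<forall>w\<in>K. c0 \<bullet> w \<noteq> 0) \<longrightarrow>
        (\<forall>\<epsilon>>0. eventually (\<lambda>k. \<forall>y\<in>K. pangle (g (r k) *v y) x < \<epsilon>) sequentially)"
    by blast
  define W where "W = {w. w \<noteq> 0 \<and> c0 \<bullet> w \<noteq> 0}"
  have c00: "c0 \<noteq> 0" using c0x by auto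
  have "W \<in> affine_charts" unfolding affine_charts_def W_def
    by (rule CollectI, rule exI[of _ c0]) (simp add: c00)
  moreover have "x \<in> W" using x0 c0x by (simp add: W_def)
  moreover have "\<forall>K. compact K \<and> K \<subseteq> W \<longrightarrow>
      (\<forall>\<epsilon>>0. eventually (\<lambda>k. \<forall>y\<in>K. pangle (g (r k) *v y) x < \<epsilon>) sequentially)"
  proof (rule allI, rule impI)
    fix K :: "(real^'n) set" assume "compact K \<and> K \<subseteq> W"
    then have "compact K \<and> (\<forall>w\<in>K. c0 \<bullet> w \<noteq> 0)" by (auto simp: W_def)
    then show "\<forall>\<epsilon>>0. eventually (\<lambda>k. \<forall>y\<in>K. pangle (g (r k) *v y) x < \<epsilon>) sequentially"
      using conv by blast
  qed
  ultimately show ?thesis using r by blast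
qed




definition Sv :: "('n \<Rightarrow> real) \<Rightarrow> real^'n \<Rightarrow> real^'n" where
  "Sv s v = (\<chi> i. s i * v $ i)"
definition Pp :: "('n \<Rightarrow> real) \<Rightarrow> real^'n \<Rightarrow> real^'n" where
  "Pp s v = (\<chi> i. if s i = 1 then v $ i else 0)"
definition Pm :: "('n \<Rightarrow> real) \<Rightarrow> real^'n \<Rightarrow> real^'n" where
  "Pm s v = (\<chi> i. if s i = 1 then 0 else v $ i)"

lemma sf_inner: "signform s u v = u \<bullet> Sv s v"
  by (simp add: signform_def inner_vec_def Sv_def algebra_simps)

lemma sq1: "(s::'n \<Rightarrow> real) i = 1 \<or> s i = -1 \<Longrightarrow> s i * s i = 1"
  by auto

lemma SS: "\<forall>i. s i = 1 \<or> s i = -1 \<Longrightarrow> Sv s (Sv s v) = v"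
proof -
  assume sg: "\<forall>i. s i = 1 \<or> s i = -1"
  have "s i * (s i * v $ i) = v $ i" for i using sq1[of s i] sg by (simp add: mult.assoc[symmetric])
  then show ?thesis by (simp add: Sv_def vec_eq_iff)
qed

lemma Sv_inner: "Sv s u \<bullet> v = u \<bullet> Sv s v"
  by (simp add: inner_vec_def Sv_def algebra_simps)

lemma Sv_Sv_inner: "\<forall>i. s i = 1 \<or> s i = -1 \<Longrightarrow> Sv s u \<bullet> Sv s v = u \<bullet> v"
  by (simp add: Sv_inner SS)

lemma norm_Sv: "\<forall>i. s i = 1 \<or> s i = -1 \<Longrightarrow> norm (Sv s v) = norm v"
  by (simp add: norm_eq_sqrt_inner Sv_Sv_inner)

lemma Sv_add: "Sv s (u + v) = Sv s u + Sv s v"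
  by (simp add: Sv_def vec_eq_iff algebra_simps)
lemma Sv_diff: "Sv s (u - v) = Sv s u - Sv s v"
  by (simp add: Sv_def vec_eq_iff algebra_simps)
lemma Sv_scale: "Sv s (t *\<^sub>R v) = t *\<^sub>R Sv s v"
  by (simp add: Sv_def vec_eq_iff algebra_simps)

lemma sf_sym: "signform s u v = signform s v u"
  by (simp add: signform_def algebra_simps)

lemma sf_bound: "\<forall>i. s i = 1 \<or> s i = -1 \<Longrightarrow> \<bar>signform s u v\<bar> \<le> norm u * norm v"
  using Cauchy_Schwarz_ineq2[of u "Sv s v"] by (simp add: sf_inner norm_Sv)

lemma sf_Sv: "\<forall>i. s i = 1 \<or> s i = -1 \<Longrightarrow> signform s (Sv s u) (Sv s v) = signform s u v"
  by (simp add: sf_inner SS Sv_inner)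

lemma sf_add_left: "signform s (u + w) v = signform s u v + signform s w v"
  by (simp add: sf_inner inner_add_left)
lemma sf_add_right: "signform s v (u + w) = signform s v u + signform s v w"
  by (simp add: sf_inner Sv_add inner_add_right)
lemma sf_diff_left: "signform s (u - w) v = signform s u v - signform s w v"
  by (simp add: sf_inner inner_diff_left)
lemma sf_diff_right: "signform s v (u - w) = signform s v u - signform s v w"
  by (simp add: sf_inner Sv_diff inner_diff_right)
lemma sf_scale_left: "signform s (t *\<^sub>R u) v = t * signform s u v"
  by (simp add: sf_inner)
lemma sf_scale_right: "signform s v (t *\<^sub>R u) = t * signform s v u"
  by (simp add: sf_inner Sv_scale)

lemma PpPm: "v = Pp s v + Pm s v"
  by (simp add: Pp_def Pm_def vec_eq_iff)

lemma Sv_PpPm: "\<forall>i. s i = 1 \<or> s i = -1 \<Longrightarrow> Sv s v = Pp s v - Pm s v"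
  by (auto simp: Pp_def Pm_def Sv_def vec_eq_iff)

lemma Pp_Pm_inner: "Pp s u \<bullet> Pm s v = 0"
  by (auto simp: Pp_def Pm_def inner_vec_def intro!: sum.neutral)

lemma Pp_inner: "Pp s u \<bullet> v = Pp s u \<bullet> Pp s v"
  unfolding Pp_def inner_vec_def by (intro sum.cong) auto
lemma Pm_inner: "Pm s u \<bullet> v = Pm s u \<bullet> Pm s v"
  unfolding Pm_def inner_vec_def by (intro sum.cong) auto

lemma sf_PpPm: "\<forall>i. s i = 1 \<or> s i = -1 \<Longrightarrow> signform s u v = Pp s u \<bullet> Pp s v - Pm s u \<bullet> Pm s v"
proof -
  assume sg: "\<forall>i. s i = 1 \<or> s i = -1"
  have "signform s u v = (Pp s u + Pm s u) \<bullet> (Pp s v - Pm s v)"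
    using PpPm[of u s] by (simp add: sf_inner Sv_PpPm[OF sg])
  also have "\<dots> = Pp s u \<bullet> Pp s v - Pm s u \<bullet> Pm s v"
    by (simp add: inner_add_left inner_diff_right Pp_Pm_inner inner_commute[of "Pm s u" "Pp s v"])
  finally show ?thesis .
qed

lemma Pp_Pp: "Pp s (Pp s v) = Pp s v" by (simp add: Pp_def vec_eq_iff)
lemma Pm_Pm: "Pm s (Pm s v) = Pm s v" by (simp add: Pm_def vec_eq_iff)
lemma Pp_Pm: "Pp s (Pm s v) = 0" by (simp add: Pp_def Pm_def vec_eq_iff)
lemma Pm_Pp: "Pm s (Pp s v) = 0" by (simp add: Pp_def Pm_def vec_eq_iff)
lemma Pp_scale: "Pp s (t *\<^sub>R v) = t *\<^sub>R Pp s v" by (simp add: Pp_def vec_eq_iff)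
lemma Pm_scale: "Pm s (t *\<^sub>R v) = t *\<^sub>R Pm s v" by (simp add: Pm_def vec_eq_iff)
lemma Pp_diff: "Pp s (u - v) = Pp s u - Pp s v" by (simp add: Pp_def vec_eq_iff)
lemma Pm_diff: "Pm s (u - v) = Pm s u - Pm s v" by (simp add: Pm_def vec_eq_iff)

lemma norm_PpPm: "norm v \<le> norm (Pp s v) + norm (Pm s v)"
  by (metis PpPm norm_triangle_ineq)

lemma unit_perp_supp:
  fixes x :: "real^'n"
  assumes ij: "i \<noteq> j"
  shows "\<exists>f. norm f = 1 \<and> f \<bullet> x = 0 \<and> (\<forall>k. k \<noteq> i \<and> k \<noteq> j \<longrightarrow> f $ k = 0)"
proof (cases "x $ i = 0 \<and> x $ j = 0")
  case True
  show ?thesis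
  proof (rule exI[of _ "axis i 1"], intro conjI allI impI)
    show "norm (axis i 1 :: real^'n) = 1" by simp
    show "axis i 1 \<bullet> x = 0" using True by (simp add: inner_axis')
    fix k assume "k \<noteq> i \<and> k \<noteq> j" then show "axis i 1 $ k = (0::real)" by (simp add: axis_def)
  qed
next
  case False
  define h :: "real^'n" where "h = x $ j *\<^sub>R axis i 1 - x $ i *\<^sub>R axis j 1"
  have hx: "h \<bullet> x = 0" by (simp add: h_def inner_diff_left inner_axis')
  have "h $ i = x $ j" using ij by (simp add: h_def axis_def)
  moreover have "h $ j = - x $ i" using ij by (simp add: h_def axis_def)
  ultimately have "h $ i \<noteq> 0 \<or> h $ j \<noteq> 0" using False by auto
  then have "h \<noteq> 0" by auto
  then have hn: "norm h > 0" by simp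
  have hk: "h $ k = 0" if "k \<noteq> i" "k \<noteq> j" for k using that by (simp add: h_def axis_def)
  show ?thesis
    by (rule exI[of _ "(1 / norm h) *\<^sub>R h"]) (use hn hx hk in auto)
qed




lemma ein_cc:
  fixes g :: "real^'n^'n" and s :: "'n \<Rightarrow> real"
  assumes sg: "\<forall>i. s i = 1 \<or> s i = -1"
    and gi: "invertible g" and gp: "\<forall>v w. signform s (g *v v) (g *v w) = signform s v w"
    and xx: "signform s x x = 0" and nz: "g *v x \<noteq> 0"
  shows "signform s (Sv s (cc g x)) (Sv s (cc g x)) = 0"
    and "RR g x (Sv s (cc g x)) = (1 / (aa g x)^2) *\<^sub>R Sv s (uu g x)"
    and "signform s (uu g x) (uu g x) = 0"
proof -
  define a where "a = aa g x"
  define u where "u = uu g x"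
  define c where "c = cc g x"
  have apos: "a > 0" using aa_pos[OF nz] by (simp add: a_def)
  obtain Bm where Bm: "g ** Bm = mat 1" using gi invertible_right_inverse by blast
  define q where "q = Bm *v Sv s u"
  have gq: "g *v q = Sv s u" by (simp add: q_def matrix_vector_mul_assoc Bm)
  have gx: "g *v x = a *\<^sub>R u" using apos by (simp add: u_def a_def uu_def)
  have uu0: "signform s u u = 0"
  proof -
    have "signform s (g *v x) (g *v x) = 0" using gp xx by simp
    then have "a * (a * signform s u u) = 0" by (simp add: gx sf_scale_left sf_scale_right)
    then show ?thesis using apos by simp
  qed
  have qw: "Sv s q \<bullet> w = a * (c \<bullet> w)" for w
  proof -
    have "Sv s q \<bullet> w = signform s q w" by (simp add: sf_inner Sv_inner)
    also have "\<dots> = signform s (g *v q) (g *v w)" using gp by simp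
    also have "\<dots> = Sv s u \<bullet> Sv s (g *v w)" by (simp add: gq sf_inner)
    also have "\<dots> = u \<bullet> (g *v w)" using sg by (simp add: Sv_Sv_inner)
    also have "\<dots> = a * (c \<bullet> w)" using apos by (simp add: c_def cc_dot u_def a_def)
    finally show ?thesis .
  qed
  have "(Sv s q - a *\<^sub>R c) \<bullet> (Sv s q - a *\<^sub>R c) = Sv s q \<bullet> (Sv s q - a *\<^sub>R c) - a * (c \<bullet> (Sv s q - a *\<^sub>R c))"
    by (simp add: inner_diff_left)
  also have "\<dots> = 0" by (simp only: qw)
  finally have "(Sv s q - a *\<^sub>R c) \<bullet> (Sv s q - a *\<^sub>R c) = 0" .
  then have Sq: "Sv s q = a *\<^sub>R c" by simp
  have v: "Sv s c = (1 / a) *\<^sub>R q"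
  proof -
    have "Sv s (Sv s q) = a *\<^sub>R Sv s c" by (simp add: Sq Sv_scale)
    then show ?thesis using SS[OF sg] apos by simp
  qed
  show "signform s (Sv s (cc g x)) (Sv s (cc g x)) = 0"
  proof -
    have "signform s q q = signform s (g *v q) (g *v q)" using gp by simp
    also have "\<dots> = signform s u u" by (simp add: gq sf_Sv[OF sg])
    finally have "signform s q q = 0" using uu0 by simp
    then show ?thesis by (simp add: c_def[symmetric] v sf_scale_left sf_scale_right)
  qed
  then have cv: "c \<bullet> Sv s c = 0" by (simp add: c_def sf_inner SS[OF sg] inner_commute)
  show "RR g x (Sv s (cc g x)) = (1 / (aa g x)^2) *\<^sub>R Sv s (uu g x)"
  proof -
    have "g *v Sv s c = (1 / a) *\<^sub>R Sv s u" by (simp add: v matrix_vector_mult_scaleR gq)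
    then show ?thesis using cv apos
      by (simp add: RR_def c_def[symmetric] a_def[symmetric] u_def[symmetric] power2_eq_square)
  qed
  show "signform s (uu g x) (uu g x) = 0" using uu0 by (simp add: u_def)
qed




lemma ein_bad:
  fixes s :: "'n::finite \<Rightarrow> real" and x c fp fm :: "real^'n" and M :: real
  assumes sg: "\<forall>i. s i = 1 \<or> s i = -1"
    and xx: "signform s x x = 0" and xu: "norm x = 1"
    and fp: "norm fp = 1" "Pp s fp = fp" "fp \<bullet> x = 0"
    and fm: "norm fm = 1" "Pm s fm = fm" "fm \<bullet> x = 0"
    and cx: "c \<bullet> x = 1" and vv: "signform s (Sv s c) (Sv s c) = 0"
    and M: "M > 0" and cn: "norm c > (M + 1)^2"
  shows "\<exists>ys. ys \<in> Ein_space s \<and> c \<bullet> ys = 0 \<and> cs ys x \<ge> (1 - 2 / M) / (1 + 2 / M)"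
proof -
  define v where "v = Sv s c"
  define y where "y = Sv s x"
  have x1: "x \<bullet> x = 1" using xu by (simp add: dot_square_norm)
  have yy: "y \<bullet> y = 1" using x1 sg by (simp add: y_def Sv_Sv_inner)
  have yx: "y \<bullet> x = 0" using xx by (simp add: y_def Sv_inner sf_inner)
  have xy: "x \<bullet> y = 0" using yx by (simp add: inner_commute)
  have vy: "v \<bullet> y = 1" using cx sg by (simp add: v_def y_def Sv_Sv_inner)
  define \<alpha> where "\<alpha> = v \<bullet> x"
  define t where "t = v - \<alpha> *\<^sub>R x - y"
  have vdec: "v = \<alpha> *\<^sub>R x + y + t" by (simp add: t_def)
  have tx: "t \<bullet> x = 0" by (simp add: t_def inner_diff_left x1 yx \<alpha>_def)
  have ty: "t \<bullet> y = 0" by (simp add: t_def inner_diff_left vy xy yy)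
  have Bxx: "signform s x x = 0" by (rule xx)
  have Bxy: "signform s x y = 1" using x1 sg by (simp add: sf_inner y_def SS)
  have Byx: "signform s y x = 1" using Bxy sf_sym by metis
  have Byy: "signform s y y = 0" using sg xx by (simp add: y_def sf_Sv)
  have Btx: "signform s t x = 0" using ty by (simp add: sf_inner y_def)
  have Bxt: "signform s x t = 0" using Btx sf_sym by metis
  have Bty: "signform s t y = 0" using tx sg by (simp add: sf_inner y_def SS)
  have Byt: "signform s y t = 0" using Bty sf_sym by metis
  have "signform s v v = 2 * \<alpha> + signform s t t"
    unfolding vdec
    by (simp add: sf_add_left sf_add_right sf_scale_left sf_scale_right Bxx Bxy Byx Byy Btx Bxt Bty Byt)
  moreover have "signform s v v = 0" using vv by (simp add: v_def)
  ultimately have a2: "2 * \<alpha> = - signform s t t" by simp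
  have "\<bar>signform s t t\<bar> \<le> norm t * norm t" by (rule sf_bound[OF sg])
  then have aa: "\<bar>\<alpha>\<bar> \<le> (norm t)^2 / 2" using a2 by (simp add: power2_eq_square)
  have ny: "norm y = 1" using xu sg by (simp add: y_def norm_Sv)
  have "norm v \<le> norm (\<alpha> *\<^sub>R x) + norm y + norm t"
    unfolding vdec by (metis norm_triangle_ineq order_trans add_right_mono)
  then have "norm v \<le> (norm t)^2 / 2 + 1 + norm t" using aa xu ny by simp
  also have "\<dots> \<le> (norm t + 1)^2" by (simp add: power2_eq_square algebra_simps)
  finally have "norm v \<le> (norm t + 1)^2" .
  moreover have "norm v = norm c" using sg by (simp add: v_def norm_Sv)
  ultimately have "(M + 1)^2 < (norm t + 1)^2" using cn by simp
  then have Mt: "M < norm t"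
    using power_less_imp_less_base[of "M + 1" 2 "norm t + 1"] by simp
  define tp where "tp = Pp s t"
  define tm where "tm = Pm s t"
  have tpm: "tp \<bullet> x + tm \<bullet> x = 0" using tx PpPm[of t s] by (metis inner_add_left tm_def tp_def)
  have "tp \<bullet> x - tm \<bullet> x = 0"
    using Btx sf_PpPm[OF sg, of t x] by (simp add: tp_def tm_def Pp_inner[of s t x] Pm_inner[of s t x])
  then have tpx: "tp \<bullet> x = 0" and tmx: "tm \<bullet> x = 0" using tpm by auto
  define ep where "ep = (if tp = 0 then fp else (1 / norm tp) *\<^sub>R tp)"
  define em where "em = (if tm = 0 then fm else (1 / norm tm) *\<^sub>R tm)"
  have ep1: "norm ep = 1" and epP: "Pp s ep = ep" and epx: "ep \<bullet> x = 0" and tpe: "tp \<bullet> ep = norm tp"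
    using fp tpx by (auto simp: ep_def tp_def Pp_scale Pp_Pp dot_square_norm power2_eq_square)
  have em1: "norm em = 1" and emP: "Pm s em = em" and emx: "em \<bullet> x = 0" and tme: "tm \<bullet> em = norm tm"
    using fm tmx by (auto simp: em_def tm_def Pm_scale Pm_Pm dot_square_norm power2_eq_square)
  define e where "e = ep - em"
  have Ppe: "Pp s e = ep" using epP emP Pp_Pm[of s em] by (metis Pp_diff diff_zero e_def)
  have Pme: "Pm s e = - em" using epP emP Pm_Pp[of s ep] by (metis Pm_diff diff_0 e_def)
  have Bee: "signform s e e = 0"
    using ep1 em1 by (simp add: sf_PpPm[OF sg] Ppe Pme dot_square_norm)
  have ex: "e \<bullet> x = 0" by (simp add: e_def inner_diff_left epx emx)
  have Bxe: "signform s x e = 0"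
  proof -
    have "Pp s x \<bullet> ep = 0" using epx epP Pp_inner[of s ep x] by (simp add: inner_commute)
    moreover have "Pm s x \<bullet> em = 0" using emx emP Pm_inner[of s em x] by (simp add: inner_commute)
    ultimately show ?thesis by (simp add: sf_PpPm[OF sg] Ppe Pme)
  qed
  have xe: "x \<bullet> e = 0" using ex by (simp add: inner_commute)
  have Bye: "signform s y e = 0"
    using xe sg by (simp add: sf_inner y_def Sv_Sv_inner)
  have Bte: "signform s t e = norm tp + norm tm"
    by (simp add: sf_PpPm[OF sg] Ppe Pme tp_def[symmetric] tm_def[symmetric] tpe tme)
  define \<beta> where "\<beta> = c \<bullet> e"
  have "c \<bullet> e = signform s v e" using sg by (simp add: v_def sf_inner Sv_inner SS)
  also have "\<dots> = norm tp + norm tm"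
    unfolding vdec by (simp add: sf_add_left sf_scale_left Bxe Bye Bte)
  finally have be: "\<beta> = norm tp + norm tm" by (simp add: \<beta>_def)
  have "norm t \<le> norm tp + norm tm" by (simp add: tp_def tm_def norm_PpPm)
  then have bM: "\<beta> > M" using Mt be by simp
  then have bpos: "\<beta> > 0" using M by simp
  define ys where "ys = x - (1 / \<beta>) *\<^sub>R e"
  have cys: "c \<bullet> ys = 0" using bpos by (simp add: ys_def inner_diff_right cx \<beta>_def[symmetric])
  have ysx: "ys \<bullet> x = 1" by (simp add: ys_def inner_diff_left x1 ex)
  have Bys: "signform s ys ys = 0"
  proof -
    have Bex: "signform s e x = 0" using Bxe sf_sym by metis
    show ?thesis
      by (simp add: ys_def sf_diff_left sf_diff_right sf_scale_left sf_scale_right Bxx Bxe Bex Bee)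
  qed
  have ysE: "ys \<in> Ein_space s" using ysx Bys by (auto simp: Ein_space_def)
  have ne: "norm e \<le> 2"
  proof -
    have "norm e \<le> norm ep + norm em" unfolding e_def by (rule norm_triangle_ineq4)
    then show ?thesis using ep1 em1 by simp
  qed
  have "cs (1 *\<^sub>R x + (- (1 / \<beta>) *\<^sub>R e)) x \<ge> (\<bar>x \<bullet> x\<bar> - 2 / M) / (1 + 2 / M)"
  proof (rule est)
    show "norm x = 1" by fact
    show "norm x = 1" by fact
    show "(1::real) \<noteq> 0" by simp
    show "0 \<le> 2 / M" using M by simp
    have "norm (- (1 / \<beta>) *\<^sub>R e) = norm e / \<beta>" using bpos by simp
    also have "\<dots> \<le> 2 / \<beta>" using ne bpos by (simp add: divide_right_mono)
    also have "\<dots> \<le> 2 / M" using bM M by (simp add: frac_le)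
    finally show "norm (- (1 / \<beta>) *\<^sub>R e) \<le> 2 / M * \<bar>1\<bar>" by simp
  qed
  moreover have "1 *\<^sub>R x + (- (1 / \<beta>) *\<^sub>R e) = ys" by (simp add: ys_def)
  ultimately have "cs ys x \<ge> (1 - 2 / M) / (1 + 2 / M)" using x1 by simp
  then show ?thesis using ysE cys by blast
qed




lemma two_elems:
  assumes "finite S" "card S \<ge> 2"
  shows "\<exists>i j. i \<in> S \<and> j \<in> S \<and> i \<noteq> j"
proof -
  have "S \<noteq> {}" using assms by auto
  then obtain i where i: "i \<in> S" by blast
  have "card (S - {i}) \<ge> 1" using assms i by simp
  then have "S - {i} \<noteq> {}" by (intro notI) simp
  then obtain j where "j \<in> S - {i}" by blast
  then show ?thesis using i by blast
qed

lemma lin_bound: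
  fixes L :: "real^'n \<Rightarrow> real^'n"
  assumes "linear L"
  shows "norm (L w) \<le> norm w * (\<Sum>i\<in>UNIV. norm (L (axis i 1)))"
proof -
  have "w = (\<Sum>i\<in>UNIV. (w$i) *\<^sub>R axis i 1)"
    using basis_expansion[of w] by (simp add: scalar_mult_eq_scaleR)
  then have "L w = (\<Sum>i\<in>UNIV. (w$i) *\<^sub>R L (axis i 1))"
    using assms by (metis (no_types, lifting) linear_scale linear_sum sum.cong)
  then have "norm (L w) \<le> (\<Sum>i\<in>UNIV. \<bar>w$i\<bar> * norm (L (axis i 1)))"
    by (metis (no_types, lifting) norm_scaleR norm_sum sum.cong)
  also have "\<dots> \<le> (\<Sum>i\<in>UNIV. norm w * norm (L (axis i 1)))"
    by (rule sum_mono) (simp add: component_le_norm_cart mult_right_mono)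
  finally show ?thesis by (simp add: sum_distrib_left)
qed

lemma exist_fp:
  fixes s :: "'n::finite \<Rightarrow> real" and x :: "real^'n"
  assumes "card {i. s i = 1} \<ge> 2"
  shows "\<exists>f. norm f = 1 \<and> Pp s f = f \<and> f \<bullet> x = 0"
proof -
  obtain i j where ij: "s i = 1" "s j = 1" "i \<noteq> j"
    using two_elems[OF _ assms] by auto
  obtain f where f: "norm f = 1" "f \<bullet> x = 0" "\<forall>k. k \<noteq> i \<and> k \<noteq> j \<longrightarrow> f $ k = 0"
    using unit_perp_supp[OF ij(3)] by blast
  have "Pp s f = f" using f(3) ij by (auto simp: Pp_def vec_eq_iff)
  then show ?thesis using f by blast
qed

lemma exist_fm:
  fixes s :: "'n::finite \<Rightarrow> real" and x :: "real^'n"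
  assumes "card {i. s i = -1} \<ge> 2"
  shows "\<exists>f. norm f = 1 \<and> Pm s f = f \<and> f \<bullet> x = 0"
proof -
  obtain i j where ij: "s i = -1" "s j = -1" "i \<noteq> j"
    using two_elems[OF _ assms] by auto
  obtain f where f: "norm f = 1" "f \<bullet> x = 0" "\<forall>k. k \<noteq> i \<and> k \<noteq> j \<longrightarrow> f $ k = 0"
    using unit_perp_supp[OF ij(3)] by blast
  have nk: "k \<noteq> i \<and> k \<noteq> j" if "s k = 1" for k using ij that by auto
  have "Pm s f = f" using f(3) nk by (auto simp: Pm_def vec_eq_iff)
  then show ?thesis using f by blast
qed

definition Pi_ein :: "('n \<Rightarrow> real) \<Rightarrow> real^'n \<Rightarrow> real^'n \<Rightarrow> real^'n" where
  "Pi_ein s x w = w - (w \<bullet> x) *\<^sub>R x - (w \<bullet> Sv s x) *\<^sub>R Sv s x"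

lemma linear_Pi: "linear (Pi_ein s x)"
  by (rule linearI) (simp_all add: Pi_ein_def inner_add_left algebra_simps scaleR_add_left)

lemma Pi_tan:
  assumes sg: "\<forall>i. s i = 1 \<or> s i = -1" and xx: "signform s x x = 0" and xu: "norm x = 1"
  shows "Pi_ein s x w \<bullet> x = 0 \<and> signform s x (Pi_ein s x w) = 0"
proof -
  define y where "y = Sv s x"
  have x1: "x \<bullet> x = 1" using xu by (simp add: dot_square_norm)
  have yy: "y \<bullet> y = 1" using x1 sg by (simp add: y_def Sv_Sv_inner)
  have yx: "y \<bullet> x = 0" using xx by (simp add: y_def Sv_inner sf_inner)
  have xy: "x \<bullet> y = 0" using yx by (simp add: inner_commute)
  have "Pi_ein s x w \<bullet> x = 0"
    by (simp add: Pi_ein_def y_def[symmetric] inner_diff_left x1 yx)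
  moreover have "signform s x (Pi_ein s x w) = Pi_ein s x w \<bullet> y"
    by (simp add: sf_inner y_def Sv_inner[symmetric] inner_commute)
  moreover have "Pi_ein s x w \<bullet> y = 0"
    by (simp add: Pi_ein_def y_def[symmetric] inner_diff_left xy yy)
  ultimately show ?thesis by simp
qed

lemma RR_Pi:
  assumes nz: "A *v x \<noteq> 0"
  shows "RR A x w = (w \<bullet> Sv s x) *\<^sub>R RR A x (Sv s x) + RR A x (Pi_ein s x w)"
  by (simp add: Pi_ein_def RR_diff RR_scale RR_x[OF nz])




lemma ein_case:
  fixes g :: "nat \<Rightarrow> real^'n^'n" and T :: "nat \<Rightarrow> real" and x :: "real^'n"
    and s :: "'n \<Rightarrow> real" and p q :: nat
  assumes sg: "\<forall>i. s i = 1 \<or> s i = -1"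
    and cp: "card {i. s i = 1} = p + 1" and cq: "card {i. s i = -1} = q + 1"
    and p2: "p \<ge> 2" and q2: "q \<ge> 2"
    and gG: "\<forall>k. g k \<in> O_lifts s"
    and Tpos: "\<forall>k. T k > 0"
    and Tlim: "filterlim T at_top sequentially"
    and xX: "x \<in> Ein_space s" and xu: "norm x = 1"
    and cond1: "\<forall>xs. (\<forall>k. xs k \<in> Ein_space s) \<and> (\<lambda>k. pangle (xs k) x) \<longlonglongrightarrow> 0
                   \<longrightarrow> (\<lambda>k. pangle (g k *v xs k) x) \<longlonglongrightarrow> 0"
    and cond2: "\<forall>v\<in>Ein_tangent s x. v \<noteq> 0 \<longrightarrow>
                   (\<lambda>k. ln (dnorm (g k) x v) / T k) \<longlonglongrightarrow> -1"
  shows "\<exists>r. strict_mono r \<and>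
           (\<exists>W\<in>Minkowski_patches s. x \<in> W \<and>
              (\<forall>K. compact K \<and> K \<subseteq> W \<longrightarrow>
                 (\<forall>\<epsilon>>0. eventually (\<lambda>k. \<forall>y\<in>K. pangle (g (r k) *v y) x < \<epsilon>)
                          sequentially)))"
proof -
  have x0: "x \<noteq> 0" using xu by auto
  have xx: "signform s x x = 0" using xX by (simp add: Ein_space_def)
  have gi: "\<forall>k. invertible (g k)" using gG by (simp add: O_lifts_def)
  have gp: "\<forall>k. \<forall>v w. signform s (g k *v v) (g k *v w) = signform s v w"
    using gG by (simp add: O_lifts_def)
  have nz: "\<forall>k. g k *v x \<noteq> 0" using gi x0 inv_nz by blast
  have "(\<lambda>k. pangle (g k *v x) x) \<longlonglongrightarrow> 0"
    using cond1[rule_format, of "\<lambda>k. x"] xX pangle_self[OF x0] by simp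
  then have ux: "(\<lambda>k. \<bar>uu (g k) x \<bullet> x\<bar>) \<longlonglongrightarrow> 1" by (rule ux_lim[OF nz xu])
  have Rt: "(\<lambda>k. RR (g k) x v) \<longlonglongrightarrow> 0" if "v \<bullet> x = 0 \<and> signform s x v = 0" for v
    by (rule Rtan_to0[OF nz Tpos Tlim]) (use cond2 that in \<open>auto simp: Ein_tangent_def\<close>)
  have cp2: "card {i. s i = 1} \<ge> 2" using cp p2 by simp
  have cq2: "card {i. s i = -1} \<ge> 2" using cq q2 by simp
  obtain fp where fp: "norm fp = 1" "Pp s fp = fp" "fp \<bullet> x = 0"
    using exist_fp[OF cp2, of x] by blast
  obtain fm where fm: "norm fm = 1" "Pm s fm = fm" "fm \<bullet> x = 0"
    using exist_fm[OF cq2, of x] by blast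
  have gi': "invertible (g k)" for k using gi by blast
  have gp': "\<forall>v w. signform s (g k *v v) (g k *v w) = signform s v w" for k using gp by blast
  have nz': "g k *v x \<noteq> 0" for k using nz by blast
  define y where "y = Sv s x"
  define c where "c k = cc (g k) x" for k
  define ee where "ee i = Pi_ein s x (axis i 1)" for i
  define \<rho> where "\<rho> k = (\<Sum>i\<in>UNIV. norm (RR (g k) x (ee i)))" for k
  have rl: "\<rho> \<longlonglongrightarrow> 0"
  proof -
    have "(\<lambda>k. \<Sum>i\<in>UNIV. norm (RR (g k) x (ee i))) \<longlonglongrightarrow> (\<Sum>i\<in>(UNIV::'n set). 0)"
      by (intro tendsto_sum tendsto_norm_zero Rt) (simp add: ee_def Pi_tan[OF sg xx xu])
    moreover have "\<rho> = (\<lambda>k. \<Sum>i\<in>UNIV. norm (RR (g k) x (ee i)))" by (simp add: fun_eq_iff \<rho>_def)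
    ultimately show ?thesis by simp
  qed
  have Pib: "norm (RR (g k) x (Pi_ein s x w)) \<le> norm w * \<rho> k" for k w
  proof -
    have "linear (\<lambda>w. RR (g k) x (Pi_ein s x w))"
      using linear_compose[OF linear_Pi linear_RR] by (simp add: o_def)
    from lin_bound[OF this, of w] show ?thesis by (simp add: \<rho>_def ee_def)
  qed
  have cx: "c k \<bullet> x = 1" for k unfolding c_def using cc_x nz by blast
  have vv: "signform s (Sv s (c k)) (Sv s (c k)) = 0" for k
    unfolding c_def by (rule ein_cc(1)[OF sg gi' gp' xx nz'])
  have bd: "bounded (range c)"
  proof (rule ccontr)
    assume "\<not> ?thesis"
    then obtain \<sigma>0 where s0: "strict_mono \<sigma>0" "\<forall>j. norm (c (\<sigma>0 j)) > real j"
      using unbounded_subseq by blast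
    define \<sigma> where "\<sigma> j = \<sigma>0 ((j + 2)^2)" for j
    have \<sigma>: "strict_mono \<sigma>"
    proof -
      have "strict_mono (\<lambda>j::nat. (j + 2)^2)" by (rule strict_monoI) (simp add: power_strict_mono)
      then show ?thesis using s0(1) unfolding \<sigma>_def strict_mono_def by blast
    qed
    have cn: "norm (c (\<sigma> j)) > (real j + 1 + 1)^2" for j
    proof -
      have "real ((j+2)^2) < norm (c (\<sigma>0 ((j+2)^2)))" using s0(2) by blast
      moreover have "real ((j+2)^2) = (real j + 1 + 1)^2" by simp
      ultimately show ?thesis by (simp add: \<sigma>_def)
    qed
    have "\<forall>j. \<exists>z. z \<in> Ein_space s \<and> c (\<sigma> j) \<bullet> z = 0 \<and>
                 cs z x \<ge> (1 - 2 / (real j + 1)) / (1 + 2 / (real j + 1))"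
    proof
      fix j
      show "\<exists>z. z \<in> Ein_space s \<and> c (\<sigma> j) \<bullet> z = 0 \<and>
                 cs z x \<ge> (1 - 2 / (real j + 1)) / (1 + 2 / (real j + 1))"
      proof (rule ein_bad[OF sg xx xu fp fm cx vv])
        show "real j + 1 > 0" by simp
        show "norm (c (\<sigma> j)) > (real j + 1 + 1)^2" by (rule cn)
      qed
    qed
    then obtain ys where ys: "\<forall>j. ys j \<in> Ein_space s" "\<forall>j. c (\<sigma> j) \<bullet> ys j = 0"
      "\<forall>j. cs (ys j) x \<ge> (1 - 2 / (real j + 1)) / (1 + 2 / (real j + 1))"
      by metis
    define rr where "rr j = 2 / (real j + 1)" for j
    have rrl: "rr \<longlonglongrightarrow> 0"
    proof -
      have "(\<lambda>j. 2 * inverse (real (Suc j))) \<longlonglongrightarrow> 2 * 0"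
        by (intro tendsto_mult tendsto_const LIMSEQ_inverse_real_of_nat)
      moreover have "rr = (\<lambda>j. 2 * inverse (real (Suc j)))"
        by (simp add: fun_eq_iff rr_def divide_inverse add.commute)
      ultimately show ?thesis by simp
    qed
    have "(\<lambda>j. (1 - rr j) / (1 + rr j)) \<longlonglongrightarrow> (1 - 0) / (1 + 0)"
      by (intro tendsto_divide tendsto_diff tendsto_add tendsto_const rrl) simp
    then have lo: "(\<lambda>j. (1 - rr j) / (1 + rr j)) \<longlonglongrightarrow> 1" by simp
    have ev1: "eventually (\<lambda>j. (1 - rr j) / (1 + rr j) \<le> cs (ys j) x) sequentially"
      by (rule always_eventually) (use ys(3) in \<open>simp add: rr_def\<close>)
    have ev2: "eventually (\<lambda>j. cs (ys j) x \<le> 1) sequentially"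
      by (rule always_eventually) (use cs_le1 in blast)
    have "(\<lambda>j. cs (ys j) x) \<longlonglongrightarrow> 1"
      by (rule tendsto_sandwich[OF ev1 ev2 lo tendsto_const])
    then have "(\<lambda>j. pangle (ys j) x) \<longlonglongrightarrow> 0" by (rule cs_to_pangle)
    then have "(\<lambda>j. pangle (g (\<sigma> j) *v ys j) x) \<longlonglongrightarrow> 0"
      by (rule sub_cond1[OF cond1 xX x0 \<sigma> ys(1)])
    moreover have orth: "\<forall>j. cc (g (\<sigma> j)) x \<bullet> ys j = 0" using ys(2) by (simp add: c_def)
    ultimately show False by (intro badseq[OF nz xu ux \<sigma> _ orth])
  qed
  then obtain C where C: "\<forall>k. norm (c k) \<le> C" unfolding bounded_iff by auto
  have "norm (c 0) \<le> C" using C by blast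
  then have C0: "C \<ge> 0" by (meson norm_ge_zero order_trans)
  define \<mu> where "\<mu> k = 1 / (aa (g k) x)^2" for k
  have fpT: "fp \<bullet> x = 0 \<and> signform s x fp = 0"
  proof -
    have "Pm s fp = 0" using fp(2) Pm_Pp by metis
    moreover have "Pp s x \<bullet> fp = 0"
      using fp Pp_inner[of s fp x] by (simp add: inner_commute)
    ultimately show ?thesis using fp(2,3) by (simp add: sf_PpPm[OF sg])
  qed
  have Bfp: "signform s fp fp = 1"
  proof -
    have "Pm s fp = 0" using fp(2) Pm_Pp by metis
    then show ?thesis using fp(1,2) by (simp add: sf_PpPm[OF sg] dot_square_norm)
  qed
  define R0 where "R0 k = RR (g k) x fp" for k
  have R0l: "R0 \<longlonglongrightarrow> 0" unfolding R0_def[abs_def] by (rule Rt[OF fpT])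
  have mub: "\<mu> k \<le> 2 * C * norm (R0 k) + norm (R0 k) * norm (R0 k)" for k
  proof -
    define a where "a = aa (g k) x"
    define u where "u = uu (g k) x"
    define \<phi> where "\<phi> = c k \<bullet> fp"
    have apos: "a > 0" unfolding a_def using aa_pos nz by blast
    have uu0: "signform s u u = 0" unfolding u_def by (rule ein_cc(3)[OF sg gi' gp' xx nz'])
    have u1: "norm u = 1" unfolding u_def using uu_norm nz by blast
    have gf: "g k *v fp = a *\<^sub>R (\<phi> *\<^sub>R u + R0 k)"
      using decomp[OF nz[rule_format, of k], of fp] by (simp add: a_def u_def \<phi>_def c_def R0_def)
    have "1 = signform s (g k *v fp) (g k *v fp)" using gp Bfp by simp
    also have "\<dots> = a * a * (2 * \<phi> * signform s u (R0 k) + signform s (R0 k) (R0 k))"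
      unfolding gf
      by (simp add: sf_add_left sf_add_right sf_scale_left sf_scale_right uu0 sf_sym[of s "R0 k" u] algebra_simps)
    finally have eq: "\<mu> k = 2 * \<phi> * signform s u (R0 k) + signform s (R0 k) (R0 k)"
      using apos by (simp add: \<mu>_def a_def[symmetric] power2_eq_square field_simps)
    have "\<bar>\<phi>\<bar> \<le> C"
      using Cauchy_Schwarz_ineq2[of "c k" fp] fp(1) C by (simp add: \<phi>_def) (metis order_trans)
    moreover have "\<bar>signform s u (R0 k)\<bar> \<le> norm (R0 k)" using sf_bound[OF sg, of u "R0 k"] u1 by simp
    moreover have "\<bar>signform s (R0 k) (R0 k)\<bar> \<le> norm (R0 k) * norm (R0 k)" by (rule sf_bound[OF sg])
    ultimately have "\<bar>2 * \<phi> * signform s u (R0 k)\<bar> \<le> 2 * C * norm (R0 k)"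
      by (simp add: abs_mult mult_mono)
    then show ?thesis using eq \<open>\<bar>signform s (R0 k) (R0 k)\<bar> \<le> _\<close> by linarith
  qed
  have mul: "\<mu> \<longlonglongrightarrow> 0"
  proof (rule tendsto_sandwich[of "\<lambda>k. 0" _ _ "\<lambda>k. 2 * C * norm (R0 k) + norm (R0 k) * norm (R0 k)"])
    show "eventually (\<lambda>k. 0 \<le> \<mu> k) sequentially" by (simp add: \<mu>_def)
    show "eventually (\<lambda>k. \<mu> k \<le> 2 * C * norm (R0 k) + norm (R0 k) * norm (R0 k)) sequentially"
      using mub by simp
    show "(\<lambda>k. 0::real) \<longlonglongrightarrow> 0" by simp
    have "(\<lambda>k. 2 * C * norm (R0 k) + norm (R0 k) * norm (R0 k)) \<longlonglongrightarrow> 2 * C * 0 + 0 * 0"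
      by (intro tendsto_add tendsto_mult tendsto_const tendsto_norm_zero R0l)
    then show "(\<lambda>k. 2 * C * norm (R0 k) + norm (R0 k) * norm (R0 k)) \<longlonglongrightarrow> 0" by simp
  qed
  have Ryb: "norm (RR (g k) x y) \<le> \<mu> k + (1 + C) * \<rho> k" for k
  proof -
    define v where "v = Sv s (c k)"
    have vy: "v \<bullet> y = 1" using cx[of k] sg by (simp add: v_def y_def Sv_Sv_inner)
    have y1: "y \<bullet> y = 1" using xu by (simp add: y_def Sv_Sv_inner[OF sg] dot_square_norm norm_Sv[OF sg])
    have Rv: "RR (g k) x v = \<mu> k *\<^sub>R Sv s (uu (g k) x)"
      unfolding v_def c_def \<mu>_def by (rule ein_cc(2)[OF sg gi' gp' xx nz'])
    have "norm (uu (g k) x) = 1" using uu_norm nz by blast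
    then have nRv: "norm (RR (g k) x v) = \<mu> k"
      using sg by (simp add: Rv norm_Sv \<mu>_def)
    have "RR (g k) x (y - v) = ((y - v) \<bullet> y) *\<^sub>R RR (g k) x y + RR (g k) x (Pi_ein s x (y - v))"
      using RR_Pi[OF nz[rule_format, of k], of "y - v" s] by (simp add: y_def)
    also have "(y - v) \<bullet> y = 0" using vy y1 by (simp add: inner_diff_left)
    finally have Ryv: "RR (g k) x (y - v) = RR (g k) x (Pi_ein s x (y - v))" by simp
    have nyv: "norm (y - v) \<le> 1 + C"
    proof -
      have "norm (y - v) \<le> norm y + norm v" by (rule norm_triangle_ineq4)
      moreover have "norm y = 1" using xu sg by (simp add: y_def norm_Sv)
      moreover have "norm v \<le> C" using C sg by (simp add: v_def norm_Sv)
      ultimately show ?thesis by simp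
    qed
    have "RR (g k) x y = RR (g k) x v + RR (g k) x (y - v)" by (simp add: RR_diff)
    then have "norm (RR (g k) x y) \<le> norm (RR (g k) x v) + norm (RR (g k) x (Pi_ein s x (y - v)))"
      using Ryv by (metis norm_triangle_ineq)
    also have "\<dots> \<le> \<mu> k + norm (y - v) * \<rho> k" using nRv Pib[of k "y - v"] by simp
    also have "\<dots> \<le> \<mu> k + (1 + C) * \<rho> k"
    proof -
      have "\<rho> k \<ge> 0" by (simp add: \<rho>_def sum_nonneg)
      then show ?thesis using nyv by (simp add: mult_right_mono)
    qed
    finally show ?thesis .
  qed
  have Ryl: "(\<lambda>k. RR (g k) x y) \<longlonglongrightarrow> 0"
  proof -
    have "(\<lambda>k. norm (RR (g k) x y)) \<longlonglongrightarrow> 0"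
    proof (rule tendsto_sandwich[of "\<lambda>k. 0" _ _ "\<lambda>k. \<mu> k + (1 + C) * \<rho> k"])
      show "eventually (\<lambda>k. 0 \<le> norm (RR (g k) x y)) sequentially" by simp
      show "eventually (\<lambda>k. norm (RR (g k) x y) \<le> \<mu> k + (1 + C) * \<rho> k) sequentially"
        using Ryb by simp
      show "(\<lambda>k. 0::real) \<longlonglongrightarrow> 0" by simp
      have "(\<lambda>k. \<mu> k + (1 + C) * \<rho> k) \<longlonglongrightarrow> 0 + (1 + C) * 0"
        by (intro tendsto_add tendsto_mult tendsto_const mul rl)
      then show "(\<lambda>k. \<mu> k + (1 + C) * \<rho> k) \<longlonglongrightarrow> 0" by simp
    qed
    then show ?thesis by (rule tendsto_norm_zero_cancel)
  qed
  have Rl: "\<forall>w. (\<lambda>k. RR (g k) x w) \<longlonglongrightarrow> 0"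
  proof
    fix w
    have "(\<lambda>k. (w \<bullet> y) *\<^sub>R RR (g k) x y + RR (g k) x (Pi_ein s x w)) \<longlonglongrightarrow> (w \<bullet> y) *\<^sub>R 0 + 0"
      by (intro tendsto_add tendsto_scaleR tendsto_const Ryl Rt Pi_tan[OF sg xx xu])
    moreover have "RR (g k) x w = (w \<bullet> y) *\<^sub>R RR (g k) x y + RR (g k) x (Pi_ein s x w)" for k
      using RR_Pi[OF nz[rule_format, of k], of w s] by (simp add: y_def)
    ultimately show "(\<lambda>k. RR (g k) x w) \<longlonglongrightarrow> 0" by simp
  qed
  have bd': "bounded (range (\<lambda>k. cc (g k) x))" using bd by (simp add: c_def[abs_def])
  have "\<exists>r c0. strict_mono r \<and> (\<lambda>k. cc (g (r k)) x) \<longlonglongrightarrow> c0 \<and> c0 \<bullet> x = 1 \<and>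
     (\<forall>K. compact K \<and> (\<forall>w\<in>K. c0 \<bullet> w \<noteq> 0) \<longrightarrow>
        (\<forall>\<epsilon>>0. eventually (\<lambda>k. \<forall>y\<in>K. pangle (g (r k) *v y) x < \<epsilon>) sequentially))"
    by (rule final_step[OF nz xu ux Rl bd'])
  then obtain r c0 where r: "strict_mono r" and cl: "(\<lambda>k. cc (g (r k)) x) \<longlonglongrightarrow> c0"
    and c0x: "c0 \<bullet> x = 1"
    and conv: "\<forall>K. compact K \<and> (\<forall>w\<in>K. c0 \<bullet> w \<noteq> 0) \<longrightarrow>
        (\<forall>\<epsilon>>0. eventually (\<lambda>k. \<forall>y\<in>K. pangle (g (r k) *v y) x < \<epsilon>) sequentially)"
    by blast
  define v0 where "v0 = Sv s c0"
  have c00: "c0 \<noteq> 0" using c0x by auto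
  have v00: "v0 \<noteq> 0"
  proof
    assume "v0 = 0"
    then have "Sv s v0 = 0" by (simp add: Sv_def vec_eq_iff)
    then show False using c00 SS[OF sg] by (simp add: v0_def)
  qed
  have "(\<lambda>k. signform s (cc (g (r k)) x) (cc (g (r k)) x)) \<longlonglongrightarrow> signform s c0 c0"
    unfolding signform_def by (intro tendsto_intros cl)
  moreover have "signform s (cc (g (r k)) x) (cc (g (r k)) x) = 0" for k
    using vv[of "r k"] sf_Sv[OF sg] by (simp add: c_def)
  ultimately have "(\<lambda>k. 0::real) \<longlonglongrightarrow> signform s c0 c0" by simp
  then have "signform s c0 c0 = 0" by (rule LIMSEQ_unique[OF tendsto_const, symmetric])
  then have v0E: "v0 \<in> Ein_space s" using v00 sf_Sv[OF sg] by (simp add: Ein_space_def v0_def)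
  have v0w: "signform s v0 w = c0 \<bullet> w" for w using sg by (simp add: v0_def sf_inner Sv_Sv_inner)
  define W where "W = {w \<in> Ein_space s. signform s v0 w \<noteq> 0}"
  have "W \<in> Minkowski_patches s" unfolding Minkowski_patches_def W_def
    by (rule CollectI, rule exI[of _ v0]) (simp add: v0E)
  moreover have "x \<in> W" using xX c0x v0w by (simp add: W_def)
  moreover have "\<forall>K. compact K \<and> K \<subseteq> W \<longrightarrow>
      (\<forall>\<epsilon>>0. eventually (\<lambda>k. \<forall>y\<in>K. pangle (g (r k) *v y) x < \<epsilon>) sequentially)"
  proof (rule allI, rule impI)
    fix K :: "(real^'n) set" assume "compact K \<and> K \<subseteq> W"
    then have "compact K \<and> (\<forall>w\<in>K. c0 \<bullet> w \<noteq> 0)" using v0w by (auto simp: W_def)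
    then show "\<forall>\<epsilon>>0. eventually (\<lambda>k. \<forall>y\<in>K. pangle (g (r k) *v y) x < \<epsilon>) sequentially"
      using conv by blast
  qed
  ultimately show ?thesis using r by blast
qed



theorem lemma4p5:
  fixes X :: "(real^'n) set" and G :: "(real^'n^'n) set"
    and Tan :: "(real^'n) set" and Wfam :: "(real^'n) set set"
    and g :: "nat \<Rightarrow> real^'n^'n" and T :: "nat \<Rightarrow> real" and x :: "real^'n"
  assumes model:
    "(CARD('n) \<ge> 3 \<and> X = RP_space \<and> G = PGL_lifts \<and> Tan = RP_tangent x
        \<and> Wfam = affine_charts)
     \<or> (\<exists>s p q. (p::nat) \<ge> 2 \<and> (q::nat) \<ge> 2 \<and> (\<forall>i. s i = 1 \<or> s i = -1)
        \<and> card {i. s i = 1} = p + 1 \<and> card {i. s i = -1} = q + 1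
        \<and> X = Ein_space s \<and> G = O_lifts s \<and> Tan = Ein_tangent s x
        \<and> Wfam = Minkowski_patches s)"
    and gG: "\<forall>k. g k \<in> G"
    and Tpos: "\<forall>k. T k > 0"
    and Tlim: "filterlim T at_top sequentially"
    and xX: "x \<in> X" and xunit: "norm x = 1"
    and cond1: "\<forall>xs. (\<forall>k. xs k \<in> X) \<and> (\<lambda>k. pangle (xs k) x) \<longlonglongrightarrow> 0
                   \<longrightarrow> (\<lambda>k. pangle (g k *v xs k) x) \<longlonglongrightarrow> 0"
    and cond2: "\<forall>v\<in>Tan. v \<noteq> 0 \<longrightarrow>
                   (\<lambda>k. ln (dnorm (g k) x v) / T k) \<longlonglongrightarrow> -1"
  shows "\<exists>r. strict_mono r \<and>
           (\<exists>W\<in>Wfam. x \<in> W \<and>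
              (\<forall>K. compact K \<and> K \<subseteq> W \<longrightarrow>
                 (\<forall>\<epsilon>>0. eventually (\<lambda>k. \<forall>y\<in>K. pangle (g (r k) *v y) x < \<epsilon>)
                          sequentially)))"
proof (cases "CARD('n) \<ge> 3 \<and> X = RP_space \<and> G = PGL_lifts \<and> Tan = RP_tangent x \<and> Wfam = affine_charts")
  case True
  then have h: "X = RP_space" "G = PGL_lifts" "Tan = RP_tangent x" "Wfam = affine_charts" by auto
  have gG': "\<forall>k. g k \<in> PGL_lifts" using gG h(2) by simp
  have c1: "\<forall>xs. (\<forall>k. xs k \<in> RP_space) \<and> (\<lambda>k. pangle (xs k) x) \<longlonglongrightarrow> 0
                   \<longrightarrow> (\<lambda>k. pangle (g k *v xs k) x) \<longlonglongrightarrow> 0" using cond1 h(1) by simp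
  have c2: "\<forall>v\<in>RP_tangent x. v \<noteq> 0 \<longrightarrow>
                   (\<lambda>k. ln (dnorm (g k) x v) / T k) \<longlonglongrightarrow> -1" using cond2 h(3) by simp
  show ?thesis unfolding h(4) by (rule rp_case[OF gG' Tpos Tlim xunit c1 c2])
next
  case False
  then obtain s p q where hs: "(p::nat) \<ge> 2" "(q::nat) \<ge> 2" "\<forall>i. s i = 1 \<or> s i = -1"
        "card {i. s i = 1} = p + 1" "card {i. s i = -1} = q + 1"
        "X = Ein_space s" "G = O_lifts s" "Tan = Ein_tangent s x"
        "Wfam = Minkowski_patches s"
    using model by blast
  have gG': "\<forall>k. g k \<in> O_lifts s" using gG hs(7) by simp
  have xX': "x \<in> Ein_space s" using xX hs(6) by simp
  have c1: "\<forall>xs. (\<forall>k. xs k \<in> Ein_space s) \<and> (\<lambda>k. pangle (xs k) x) \<longlonglongrightarrow> 0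
                   \<longrightarrow> (\<lambda>k. pangle (g k *v xs k) x) \<longlonglongrightarrow> 0" using cond1 hs(6) by simp
  have c2: "\<forall>v\<in>Ein_tangent s x. v \<noteq> 0 \<longrightarrow>
                   (\<lambda>k. ln (dnorm (g k) x v) / T k) \<longlonglongrightarrow> -1" using cond2 hs(8) by simp
  show ?thesis unfolding hs(9)
    by (rule ein_case[OF hs(3) hs(4) hs(5) hs(1) hs(2) gG' Tpos Tlim xX' xunit c1 c2])
qed

end
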